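(* Let $F$ be a Ferrers diagram of semiperimeter $n+1$, $T\in\mathsf{EWtab}(F)$ and $(a_1,\ldots,a_n)\in\mathbb{Z}^n$. Then $(T,(a_1,\ldots,a_n))\in\mathsf{Rec}_{\mathsf{EW}}(F)$ if and only if $(\Psi(T),(a_1,\ldots,a_n))$ is a canonical decorated permutation.
   Context: Ferrers diagrams and graphs: a Ferrers diagram $F$ (English convention) of semiperimeter $n+1$ has rows and columns labeled by $0,\ldots,n$: the $n+1$ unit steps of its south-east boundary path, traversed from top-right to bottom-left, are labeled $0,\ldots,n$; a vertical step labels the row it bounds, a horizontal step the column it bounds (top row labeled $0$). $\mathsf{rows}(F)$, $\mathsf{cols}(F)$ are the label sets; $F$ has a cell in row $i$, column $j$ iff $i<j$. $G(F)$ has vertex set $\{0,\ldots,n\}$ with edges $\{i,j\}$ for $i\in\mathsf{rows}(F)$, $j\in\mathsf{cols}(F)$, $i<j$. Sandpile model on $G(F)$ with sink $0$: configurations $c\in\mathbb{N}^n$; non-sink $v$ unstable if $c_v\ge\deg(v)$; toppling sends one grain to each neighbour (grains to $0$ disappear); toppling the sink adds one grain to each neighbour of $0$. Recurrent: stable configurations obtainable from $c_v=\deg(v)-1$ by adding grains and stabilizing; $\mathsf{Rec}(G)$ their set; $\mathsf{Rec}^{\mathsf{min}}(G)$: recurrent configurations of minimal total grain count. Canonical toppling of a recurrent $c$: topple the sink ($U^{(0)}_c=\{0\}$), then alternately topple simultaneously all unstable vertices in $\mathsf{cols}(F)$ ($V^{(1)}_c$), all unstable in $\mathsf{rows}(F)$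 ($U^{(1)}_c$), etc.; $\mathsf{CanonTop}(c)=(U^{(0)}_c,V^{(1)}_c,U^{(1)}_c,\ldots)$ is an ordered partition of $\{0,\ldots,n\}$. For $c\in\mathsf{Rec}(G(F))$, $\mathsf{minrec}(c)$ is the configuration $m$ with $m_j=|\{\ell\in V^{(k)}_c: j<\ell,\ k>i\}|$ if $j\in U^{(i)}_c$ and $m_j=|\{\ell\in U^{(k)}_c: j>\ell,\ k\ge i\}|$ if $j\in V^{(i)}_c$. EW-tableaux: $0/1$-fillings $T$ of $F$ with top row all 1s, a 0 in every other row, and no rectangle with 0s in two diagonally opposite corners and 1s in the other two; $\mathsf{EWtab}(F)$ is their set. $\phi_{TC}(T)$ is the configuration with $c_i$ = number of 1s in row $i$ ($i\in\mathsf{rows}(F)$), $c_i$ = number of 0s in column $i$ ($i\in\mathsf{cols}(F)$); $\phi_{TC}$ is a bijection $\mathsf{EWtab}(F)\to\mathsf{Rec}^{\mathsf{min}}(G(F))$ with inverse $\phi_{CT}$. $\mathsf{CanonTop}(T):=\mathsf{CanonTop}(\phi_{TC}(T))=(U^{(0)}_T,V^{(1)}_T,U^{(1)}_T,\ldots)$. $\Psi(T)$ is the permutation of $[n]$ given by the word $\mathsf{inc}(V^{(1)}_T)\,\mathsf{dec}(U^{(1)}_T)\,\mathsf{inc}(V^{(2)}_T)\cdots$ (inc/dec = increasing/decreasing listing). A decorated EW-tableau is a pair $(T,(x_1,\ldots,x_n))$ with $T\in\mathsf{EWtab}(F)$, $0\le x_i<$ (number of 0s in row $i$ of $T$) for $i\in\mathsf{rows}(F)$,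 $0\le x_i<$ (number of 1s in column $i$ of $T$) for $i\in\mathsf{cols}(F)$. Define $\psi(x)=(\phi_{CT}(\mathsf{minrec}(x)),x-\mathsf{minrec}(x))$ for $x\in\mathsf{Rec}(G(F))$ and $\mathsf{Rec}_{\mathsf{EW}}(F)=\psi(\mathsf{Rec}(G(F)))$. Permutations: for a permutation $\pi=\pi_1\cdots\pi_n$ of $[n]$, $\pi_i$ is an ascent top if $i=1$ or $\pi_{i-1}<\pi_i$, a descent bottom if $\pi_{i-1}>\pi_i$. $\mathsf{RunDec}(\pi)=(D^{(0)}_\pi,A^{(1)}_\pi,D^{(1)}_\pi,A^{(2)}_\pi,\ldots)$ with $D^{(0)}_\pi=\{0\}$ followed by the letter sets of the maximal factors of $\pi$ consisting alternately of ascent tops ($A$-blocks) and descent bottoms ($D$-blocks). A (stable) decorated permutation is $(\pi,(a_1,\ldots,a_n))$ with $0\le a_i<|\{j\in A^{(k)}_\pi: j>i,\ k\le\ell\}|$ if $i\in D^{(\ell)}_\pi$ and $0\le a_i<|\{j\in D^{(k)}_\pi: j<i,\ k<\ell\}|$ if $i\in A^{(\ell)}_\pi$. It is canonical if moreover $a_i<\mu_i(\pi)$ for all $i$, where $\mu_i(\pi)=|\{j\in A^{(\ell)}_\pi: j>i\}|$ if $i\in D^{(\ell)}_\pi$ and $\mu_i(\pi)=|\{j\in D^{(\ell-1)}_\pi: j<i\}|$ if $i\in A^{(\ell)}_\pi$. *)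

theory Defs
  imports Main
begin

text \<open>A Ferrers diagram F of semiperimeter n+1 is encoded by its set R = rows(F) of
  row labels, a subset of {0..n}. The boundary path starts with a vertical step
  (top row labelled 0) and ends with a horizontal step (leftmost column labelled n),
  so 0 is a row label and n is a column label; every such set arises from exactly
  one Ferrers diagram.\<close>

definition ferrers :: "nat \<Rightarrow> nat set \<Rightarrow> bool" where
  "ferrers n R \<longleftrightarrow> R \<subseteq> {0..n} \<and> 0 \<in> R \<and> n \<notin> R"

definition cols :: "nat \<Rightarrow> nat set \<Rightarrow> nat set" where
  "cols n R = {0..n} - R"

definition cell :: "nat \<Rightarrow> nat set \<Rightarrow> nat \<Rightarrow> nat \<Rightarrow> bool" where
  "cell n R i j \<longleftrightarrow> i \<in> R \<and> j \<in> cols n R \<and> i < j"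

definition adj :: "nat \<Rightarrow> nat set \<Rightarrow> nat \<Rightarrow> nat \<Rightarrow> bool" where
  "adj n R u v \<longleftrightarrow> cell n R u v \<or> cell n R v u"

definition deg :: "nat \<Rightarrow> nat set \<Rightarrow> nat \<Rightarrow> nat" where
  "deg n R v = card {u \<in> {0..n}. adj n R u v}"

definition config :: "nat \<Rightarrow> (nat \<Rightarrow> nat) \<Rightarrow> bool" where
  "config n c \<longleftrightarrow> (\<forall>i. i \<notin> {1..n} \<longrightarrow> c i = 0)"

definition stable :: "nat \<Rightarrow> nat set \<Rightarrow> (nat \<Rightarrow> nat) \<Rightarrow> bool" where
  "stable n R c \<longleftrightarrow> (\<forall>v\<in>{1..n}. c v < deg n R v)"

text \<open>Toppling one unstable non-sink vertex (grains sent to the sink disappear).\<close>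
definition topple_step :: "nat \<Rightarrow> nat set \<Rightarrow> (nat \<Rightarrow> nat) \<Rightarrow> (nat \<Rightarrow> nat) \<Rightarrow> bool" where
  "topple_step n R c c' \<longleftrightarrow>
     (\<exists>v\<in>{1..n}. deg n R v \<le> c v \<and>
        c' = (\<lambda>u. if u = v then c u - deg n R v
                  else if u \<in> {1..n} \<and> adj n R v u then c u + 1 else c u))"

definition cmax :: "nat \<Rightarrow> nat set \<Rightarrow> nat \<Rightarrow> nat" where
  "cmax n R i = (if i \<in> {1..n} then deg n R i - 1 else 0)"

text \<open>Recurrent configurations: stable configurations obtainable from c_max by adding
  grains and stabilizing (adding all grains first is equivalent, by the abelian property).\<close>
definition Rec :: "nat \<Rightarrow> nat set \<Rightarrow> (nat \<Rightarrow> nat) set" where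
  "Rec n R = {c. config n c \<and> stable n R c \<and>
      (\<exists>d. config n d \<and> (topple_step n R)\<^sup>*\<^sup>* (\<lambda>i. cmax n R i + d i) c)}"

definition topple_sink :: "nat \<Rightarrow> nat set \<Rightarrow> (nat \<Rightarrow> nat) \<Rightarrow> (nat \<Rightarrow> nat)" where
  "topple_sink n R c = (\<lambda>u. if u \<in> {1..n} \<and> adj n R 0 u then c u + 1 else c u)"

definition topple_set :: "nat \<Rightarrow> nat set \<Rightarrow> (nat \<Rightarrow> nat) \<Rightarrow> nat set \<Rightarrow> (nat \<Rightarrow> nat)" where
  "topple_set n R c S = (\<lambda>u. if u \<in> {1..n}
       then (c u + card {v \<in> S. adj n R v u}) - (if u \<in> S then deg n R u else 0)
       else c u)"

text \<open>Phase 0 is the sink toppling; odd phases topple the unstable column vertices,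
  even phases \<ge> 2 the unstable (non-sink) row vertices.\<close>
fun ctphase :: "nat \<Rightarrow> nat set \<Rightarrow> (nat \<Rightarrow> nat) \<Rightarrow> nat \<Rightarrow> nat set \<times> (nat \<Rightarrow> nat)" where
  "ctphase n R c 0 = ({0}, topple_sink n R c)"
| "ctphase n R c (Suc k) =
     (let cur = snd (ctphase n R c k);
          S = {v \<in> {1..n}. v \<in> (if even k then cols n R else R) \<and> deg n R v \<le> cur v}
      in (S, topple_set n R cur S))"

definition Ublk :: "nat \<Rightarrow> nat set \<Rightarrow> (nat \<Rightarrow> nat) \<Rightarrow> nat \<Rightarrow> nat set" where
  "Ublk n R c i = fst (ctphase n R c (2 * i))"

definition Vblk :: "nat \<Rightarrow> nat set \<Rightarrow> (nat \<Rightarrow> nat) \<Rightarrow> nat \<Rightarrow> nat set" where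
  "Vblk n R c i = (if i = 0 then {} else fst (ctphase n R c (2 * i - 1)))"

definition minrec :: "nat \<Rightarrow> nat set \<Rightarrow> (nat \<Rightarrow> nat) \<Rightarrow> (nat \<Rightarrow> nat)" where
  "minrec n R c = (\<lambda>j. if j \<in> {1..n} then
       (if \<exists>i. j \<in> Ublk n R c i
        then card {l. \<exists>i k. j \<in> Ublk n R c i \<and> k > i \<and> l \<in> Vblk n R c k \<and> j < l}
        else card {l. \<exists>i k. j \<in> Vblk n R c i \<and> k \<ge> i \<and> l \<in> Ublk n R c k \<and> j > l})
     else 0)"

text \<open>A 0/1 filling of F is a predicate T with T i j = True meaning a 1 in cell (i,j);
  it is False outside the cells of F.\<close>
definition EWtab :: "nat \<Rightarrow> nat set \<Rightarrow> (nat \<Rightarrow> nat \<Rightarrow> bool) set" where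
  "EWtab n R = {T.
     (\<forall>i j. T i j \<longrightarrow> cell n R i j) \<and>
     (\<forall>j. cell n R 0 j \<longrightarrow> T 0 j) \<and>
     (\<forall>i\<in>R. i \<noteq> 0 \<longrightarrow> (\<exists>j. cell n R i j \<and> \<not> T i j)) \<and>
     (\<forall>i i' j j'. i < i' \<and> j < j' \<and> cell n R i j \<and> cell n R i j' \<and>
                  cell n R i' j \<and> cell n R i' j' \<longrightarrow>
        \<not> (\<not> T i j \<and> \<not> T i' j' \<and> T i j' \<and> T i' j) \<and>
        \<not> (\<not> T i j' \<and> \<not> T i' j \<and> T i j \<and> T i' j'))}"

definition phiTC :: "nat \<Rightarrow> nat set \<Rightarrow> (nat \<Rightarrow> nat \<Rightarrow> bool) \<Rightarrow> (nat \<Rightarrow> nat)" where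
  "phiTC n R T = (\<lambda>i. if i \<in> {1..n} then
       (if i \<in> R then card {j. cell n R i j \<and> T i j}
        else card {k. cell n R k i \<and> \<not> T k i})
     else 0)"

definition phiCT :: "nat \<Rightarrow> nat set \<Rightarrow> (nat \<Rightarrow> nat) \<Rightarrow> (nat \<Rightarrow> nat \<Rightarrow> bool)" where
  "phiCT n R c = the_inv_into (EWtab n R) (phiTC n R) c"

text \<open>Rec_EW(F) = psi(Rec(G(F))); decorations are functions vanishing outside {1..n}.\<close>
definition RecEW :: "nat \<Rightarrow> nat set \<Rightarrow> ((nat \<Rightarrow> nat \<Rightarrow> bool) \<times> (nat \<Rightarrow> int)) set" where
  "RecEW n R = (\<lambda>x. (phiCT n R (minrec n R x),
                      \<lambda>i. if i \<in> {1..n} then int (x i) - int (minrec n R x i) else 0))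
               ` Rec n R"

text \<open>Psi(T) = inc(V^(1)) dec(U^(1)) inc(V^(2)) dec(U^(2)) ...; blocks beyond index n are empty.\<close>
definition Psi :: "nat \<Rightarrow> nat set \<Rightarrow> (nat \<Rightarrow> nat \<Rightarrow> bool) \<Rightarrow> nat list" where
  "Psi n R T = concat (map (\<lambda>i. sorted_list_of_set (Vblk n R (phiTC n R T) i)
                              @ rev (sorted_list_of_set (Ublk n R (phiTC n R T) i))) [1..<n+1])"

definition asc_pos :: "nat list \<Rightarrow> nat \<Rightarrow> bool" where
  "asc_pos \<pi> p \<longleftrightarrow> p = 0 \<or> \<pi> ! (p - 1) < \<pi> ! p"

text \<open>Index (starting at 1) of the maximal factor of equal type containing position p.\<close>
definition run_no :: "nat list \<Rightarrow> nat \<Rightarrow> nat" where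
  "run_no \<pi> p = 1 + card {q. 1 \<le> q \<and> q \<le> p \<and> asc_pos \<pi> q \<noteq> asc_pos \<pi> (q - 1)}"

definition Ablk :: "nat list \<Rightarrow> nat \<Rightarrow> nat set" where
  "Ablk \<pi> l = (if l = 0 then {} else
     {\<pi> ! p | p. p < length \<pi> \<and> asc_pos \<pi> p \<and> run_no \<pi> p = 2 * l - 1})"

definition Dblk :: "nat list \<Rightarrow> nat \<Rightarrow> nat set" where
  "Dblk \<pi> l = (if l = 0 then {0} else
     {\<pi> ! p | p. p < length \<pi> \<and> \<not> asc_pos \<pi> p \<and> run_no \<pi> p = 2 * l})"

definition is_perm :: "nat \<Rightarrow> nat list \<Rightarrow> bool" where
  "is_perm n \<pi> \<longleftrightarrow> distinct \<pi> \<and> set \<pi> = {1..n}"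

definition decorated_perm :: "nat \<Rightarrow> nat list \<Rightarrow> (nat \<Rightarrow> int) \<Rightarrow> bool" where
  "decorated_perm n \<pi> a \<longleftrightarrow> is_perm n \<pi> \<and>
     (\<forall>i\<in>{1..n}. 0 \<le> a i \<and>
        (\<forall>l. i \<in> Dblk \<pi> l \<longrightarrow>
            a i < int (card {j. \<exists>k. k \<le> l \<and> j \<in> Ablk \<pi> k \<and> j > i})) \<and>
        (\<forall>l. i \<in> Ablk \<pi> l \<longrightarrow>
            a i < int (card {j. \<exists>k. k < l \<and> j \<in> Dblk \<pi> k \<and> j < i})))"

definition mu :: "nat list \<Rightarrow> nat \<Rightarrow> nat" where
  "mu \<pi> i = (if \<exists>l. i \<in> Dblk \<pi> l
     then card {j \<in> Ablk \<pi> (THE l. i \<in> Dblk \<pi> l). j > i}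
     else card {j \<in> Dblk \<pi> ((THE l. i \<in> Ablk \<pi> l) - 1). j < i})"

definition canonical_decorated_perm :: "nat \<Rightarrow> nat list \<Rightarrow> (nat \<Rightarrow> int) \<Rightarrow> bool" where
  "canonical_decorated_perm n \<pi> a \<longleftrightarrow> decorated_perm n \<pi> a \<and>
     (\<forall>i\<in>{1..n}. a i < int (mu \<pi> i))"

end

theory Submission
  imports Defs
begin

locale FD =
  fixes n :: nat and R :: "nat set"
  assumes fer: "ferrers n R"
begin

lemma R_sub: "R \<subseteq> {0..n}" and zero_R: "0 \<in> R" and n_notR: "n \<notin> R"
  using fer by (auto simp: ferrers_def)

lemma n_pos: "1 \<le> n"
  using zero_R n_notR by (cases n) auto

lemma cell_iff: "cell n R i j \<longleftrightarrow> i \<in> R \<and> j \<le> n \<and> j \<notin> R \<and> i < j"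
  unfolding cell_def cols_def by auto

lemma adj_iff: "adj n R u v \<longleftrightarrow> cell n R u v \<or> cell n R v u"
  by (simp add: adj_def)

lemma adj_sym: "adj n R u v = adj n R v u"
  by (auto simp: adj_def)

lemma adj_range: "adj n R u v \<Longrightarrow> u \<le> n \<and> v \<le> n \<and> u \<noteq> v \<and> (u \<in> R \<longleftrightarrow> v \<notin> R)"
  using R_sub by (auto simp: adj_def cell_iff)

definition nb :: "nat \<Rightarrow> nat set" where
  "nb v = {u \<in> {0..n}. adj n R u v}"

lemma nb_fin[simp]: "finite (nb v)"
  by (simp add: nb_def)

lemma nb_sub: "nb v \<subseteq> {0..n}"
  by (auto simp: nb_def)

lemma in_nb: "u \<in> nb v \<longleftrightarrow> adj n R u v"
  using adj_range by (auto simp: nb_def)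

lemma deg_nb: "deg n R v = card (nb v)"
  by (simp add: deg_def nb_def)

lemma deg_le: "deg n R v \<le> Suc n"
proof -
  have "card (nb v) \<le> card {0..n}" by (rule card_mono) (auto simp: nb_def)
  thus ?thesis by (simp add: deg_nb)
qed

lemma nb_row: "v \<in> R \<Longrightarrow> nb v = {j. cell n R v j}"
  by (auto simp: in_nb adj_iff cell_iff)

lemma nb_col: "v \<notin> R \<Longrightarrow> nb v = {i. cell n R i v}"
  by (auto simp: in_nb adj_iff cell_iff)

lemma adj0: "v \<le> n \<Longrightarrow> v \<notin> R \<Longrightarrow> adj n R 0 v"
  using zero_R by (cases "v = 0") (auto simp: adj_iff cell_iff)

lemma zero_nb_col: "v \<le> n \<Longrightarrow> v \<notin> R \<Longrightarrow> 0 \<in> nb v"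
  using adj0 in_nb by blast

lemma adj_n: assumes "v \<in> R" shows "adj n R v n"
proof -
  have "v \<le> n" using R_sub assms by auto
  moreover have "v \<noteq> n" using n_notR assms by auto
  ultimately show ?thesis using assms n_notR by (simp add: adj_iff cell_iff)
qed

lemma nb_nonempty: assumes "v \<le> n" shows "nb v \<noteq> {}"
proof (cases "v \<in> R")
  case True
  hence "n \<in> nb v" using adj_n[OF True] adj_sym in_nb by simp
  thus ?thesis by blast
next
  case False
  thus ?thesis using zero_nb_col[OF assms False] by blast
qed

lemma deg_pos: "v \<le> n \<Longrightarrow> 1 \<le> deg n R v"
  using nb_nonempty by (simp add: deg_nb card_gt_0_iff Suc_le_eq)

definition S :: "(nat \<Rightarrow> nat) \<Rightarrow> nat \<Rightarrow> nat set" where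
  "S c p = fst (ctphase n R c p)"
definition cur :: "(nat \<Rightarrow> nat) \<Rightarrow> nat \<Rightarrow> nat \<Rightarrow> nat" where
  "cur c p = snd (ctphase n R c p)"
definition TB :: "(nat \<Rightarrow> nat) \<Rightarrow> nat \<Rightarrow> nat set" where
  "TB c p = {v. \<exists>q<p. v \<in> S c q}"

definition cls :: "nat \<Rightarrow> nat \<Rightarrow> bool" where
  "cls k v \<longleftrightarrow> v \<in> (if even k then cols n R else R)"

lemma S0: "S c 0 = {0}" by (simp add: S_def)
lemma cur0: "cur c 0 = topple_sink n R c" by (simp add: cur_def)
lemma S_Suc: "S c (Suc k) = {v \<in> {1..n}. cls k v \<and> deg n R v \<le> cur c k v}"
  by (simp add: S_def cur_def cls_def Let_def)
lemma cur_Suc: "cur c (Suc k) = topple_set n R (cur c k) (S c (Suc k))"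
  by (simp add: S_def cur_def Let_def)

lemma TB_Suc: "TB c (Suc k) = TB c k \<union> S c k"
  by (auto simp: TB_def less_Suc_eq)
lemma TB1: "TB c (Suc 0) = {0}"
  by (auto simp: TB_def S0)

lemma S_range: "S c p \<subseteq> {0..n}"
  by (cases p) (auto simp: S0 S_Suc)

lemma card_nb_split: "card (nb v) = card (nb v \<inter> B) + card (nb v - B)"
  by (metis card_Int_Diff nb_fin)

lemma card_adj_eq: "card {w \<in> B. adj n R w u} = card (nb u \<inter> B)"
proof -
  have "{w \<in> B. adj n R w u} = nb u \<inter> B" by (auto simp: in_nb[symmetric])
  thus ?thesis by simp
qed

definition pinv :: "(nat \<Rightarrow> nat) \<Rightarrow> nat \<Rightarrow> bool" where
  "pinv c k \<longleftrightarrow> (\<forall>u\<in>{1..n}. cur c k u + (if u \<in> TB c (Suc k) then deg n R u else 0)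
        = c u + card (nb u \<inter> TB c (Suc k))) \<and> (\<forall>u. u \<notin> {1..n} \<longrightarrow> cur c k u = c u)"

lemma pinv_eq: "pinv c k \<Longrightarrow> u \<in> {1..n} \<Longrightarrow> cur c k u + (if u \<in> TB c (Suc k) then deg n R u else 0)
        = c u + card (nb u \<inter> TB c (Suc k))"
  unfolding pinv_def by blast

lemma inv_all:
  assumes st: "stable n R c"
  shows "pinv c k \<and> S c (Suc k) \<inter> TB c (Suc k) = {}"
proof (induction k)
  case 0
  have i0: "pinv c 0"
    unfolding pinv_def TB1 cur0 topple_sink_def
    by (auto simp: in_nb)
  moreover have "S c (Suc 0) \<inter> TB c (Suc 0) = {}" by (auto simp: S_Suc TB1)
  ultimately show ?case by blast
next
  case (Suc k)
  let ?B = "TB c (Suc k)" and ?X = "S c (Suc k)"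
  have ik: "pinv c k" and dj: "?X \<inter> ?B = {}" using Suc by auto
  have TB': "TB c (Suc (Suc k)) = ?B \<union> ?X" by (simp add: TB_Suc)
  have i1: "pinv c (Suc k)"
    unfolding pinv_def
  proof (intro conjI ballI allI impI)
    fix u assume u: "u \<in> {1..n}"
    have cs: "card (nb u \<inter> (?B \<union> ?X)) = card (nb u \<inter> ?B) + card (nb u \<inter> ?X)"
    proof -
      have "nb u \<inter> (?B \<union> ?X) = (nb u \<inter> ?B) \<union> (nb u \<inter> ?X)" by blast
      moreover have "(nb u \<inter> ?B) \<inter> (nb u \<inter> ?X) = {}" using dj by blast
      ultimately show ?thesis by (simp add: card_Un_disjoint)
    qed
    have e: "cur c k u + (if u \<in> ?B then deg n R u else 0) = c u + card (nb u \<inter> ?B)"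
      using pinv_eq[OF ik u] .
    have cu: "cur c (Suc k) u = (cur c k u + card (nb u \<inter> ?X)) - (if u \<in> ?X then deg n R u else 0)"
      using u by (simp add: cur_Suc topple_set_def card_adj_eq)
    show "cur c (Suc k) u + (if u \<in> TB c (Suc (Suc k)) then deg n R u else 0) =
          c u + card (nb u \<inter> TB c (Suc (Suc k)))"
    proof (cases "u \<in> ?X")
      case True
      hence "u \<notin> ?B" using dj by blast
      moreover have "deg n R u \<le> cur c k u" using True by (simp add: S_Suc)
      ultimately show ?thesis using e cu cs True TB' by auto
    next
      case False
      thus ?thesis using e cu cs TB' by auto
    qed
  next
    fix u :: nat assume u: "u \<notin> {1..n}"
    have "cur c k u = c u" using ik u unfolding pinv_def by blast
    moreover have "cur c (Suc k) u = cur c k u" by (simp only: cur_Suc topple_set_def if_not_P[OF u])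
    ultimately show "cur c (Suc k) u = c u" by simp
  qed
  have "S c (Suc (Suc k)) \<inter> TB c (Suc (Suc k)) = {}"
  proof (rule ccontr)
    assume "S c (Suc (Suc k)) \<inter> TB c (Suc (Suc k)) \<noteq> {}"
    then obtain v where v1: "v \<in> S c (Suc (Suc k))" and v2: "v \<in> TB c (Suc (Suc k))" by blast
    have vr: "v \<in> {1..n}" and dl: "deg n R v \<le> cur c (Suc k) v" using v1 by (auto simp: S_Suc)
    have "cur c (Suc k) v + deg n R v = c v + card (nb v \<inter> TB c (Suc (Suc k)))"
      using pinv_eq[OF i1 vr] v2 by simp
    moreover have "card (nb v \<inter> TB c (Suc (Suc k))) \<le> deg n R v"
      by (simp add: deg_nb card_mono)
    moreover have "c v < deg n R v" using st vr by (simp add: stable_def)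
    ultimately show False using dl by linarith
  qed
  with i1 show ?case by blast
qed

lemma KS:
  assumes st: "stable n R c"
  shows "v \<in> S c (Suc k) \<longleftrightarrow> v \<in> {1..n} \<and> cls k v \<and> v \<notin> TB c (Suc k) \<and>
            card (nb v - TB c (Suc k)) \<le> c v"
proof -
  have ik: "pinv c k" and dj: "S c (Suc k) \<inter> TB c (Suc k) = {}" using inv_all[OF st] by auto
  show ?thesis
  proof
    assume v: "v \<in> S c (Suc k)"
    hence vr: "v \<in> {1..n}" "cls k v" "deg n R v \<le> cur c k v" by (auto simp: S_Suc)
    have nt: "v \<notin> TB c (Suc k)" using v dj by blast
    have A: "\<forall>u\<in>{1..n}. cur c k u + (if u \<in> TB c (Suc k) then deg n R u else 0)
        = c u + card (nb u \<inter> TB c (Suc k))" using ik unfolding pinv_def by blast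
    have "cur c k v = c v + card (nb v \<inter> TB c (Suc k))" using A[rule_format, OF vr(1)] nt by simp
    thus "v \<in> {1..n} \<and> cls k v \<and> v \<notin> TB c (Suc k) \<and> card (nb v - TB c (Suc k)) \<le> c v"
      using vr nt card_nb_split[of v "TB c (Suc k)"] by (simp add: deg_nb)
  next
    assume h: "v \<in> {1..n} \<and> cls k v \<and> v \<notin> TB c (Suc k) \<and> card (nb v - TB c (Suc k)) \<le> c v"
    have A: "\<forall>u\<in>{1..n}. cur c k u + (if u \<in> TB c (Suc k) then deg n R u else 0)
        = c u + card (nb u \<inter> TB c (Suc k))" using ik unfolding pinv_def by blast
    have "cur c k v = c v + card (nb v \<inter> TB c (Suc k))" using A[rule_format, of v] h by simp
    thus "v \<in> S c (Suc k)" using h card_nb_split[of v "TB c (Suc k)"] by (simp add: S_Suc deg_nb)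
  qed
qed

lemma S_disj:
  assumes st: "stable n R c" and "q < p" "v \<in> S c p"
  shows "v \<notin> S c q"
proof -
  obtain k where p: "p = Suc k" using assms(2) by (cases p) auto
  have "S c q \<subseteq> TB c p" using assms(2) by (auto simp: TB_def)
  thus ?thesis using KS[OF st, of v k] assms p by auto
qed

lemma S_unique:
  assumes st: "stable n R c" and "v \<in> S c p" "v \<in> S c q" shows "p = q"
  using S_disj[OF st] assms by (metis nat_neq_iff)

lemma cls_iff: "v \<le> n \<Longrightarrow> cls k v \<longleftrightarrow> (even k \<longleftrightarrow> v \<notin> R)"
  by (auto simp: cls_def cols_def)

lemma S_parity:
  assumes "v \<in> S c p" shows "odd p \<longleftrightarrow> v \<notin> R"
proof (cases p)
  case 0 thus ?thesis using assms zero_R by (simp add: S0)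
next
  case (Suc k) thus ?thesis using assms by (cases "even k") (auto simp: S_Suc cls_def cols_def)
qed

end

context FD begin

definition burns :: "(nat \<Rightarrow> nat) \<Rightarrow> bool" where
  "burns c \<longleftrightarrow> (\<forall>v\<in>{0..n}. \<exists>p. v \<in> S c p)"

definition tm :: "(nat \<Rightarrow> nat) \<Rightarrow> nat \<Rightarrow> nat" where
  "tm c v = (LEAST p. v \<in> S c p)"

definition Lo :: "(nat \<Rightarrow> nat) \<Rightarrow> nat \<Rightarrow> nat" where
  "Lo t v = card {u \<in> nb v. t v < t u}"
definition Up :: "(nat \<Rightarrow> nat) \<Rightarrow> nat \<Rightarrow> nat" where
  "Up t v = card {u \<in> nb v. t v \<le> Suc (t u)}"
definition Wd :: "(nat \<Rightarrow> nat) \<Rightarrow> nat \<Rightarrow> nat" where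
  "Wd t v = card {u \<in> nb v. Suc (t u) = t v}"

lemma tm_eq: assumes st: "stable n R c" and "v \<in> S c p" shows "tm c v = p"
  unfolding tm_def
proof (rule Least_equality)
  show "v \<in> S c p" by fact
  fix y assume "v \<in> S c y" thus "p \<le> y" using S_unique[OF st assms(2)] by simp
qed

lemma TB_mono: "K \<le> K' \<Longrightarrow> TB c K \<subseteq> TB c K'"
  unfolding TB_def by (blast intro: less_le_trans)

lemma cls_Suc: "v \<le> n \<Longrightarrow> cls (Suc k) v \<longleftrightarrow> \<not> cls k v"
  by (simp add: cls_iff)

lemma exists_cls: "v \<le> n \<Longrightarrow> \<exists>k\<ge>K. cls k v"
  using cls_Suc by (cases "cls K v") (auto intro: exI[of _ "Suc K"])

lemma fin_burn:
  assumes "finite A" "\<forall>u\<in>A. \<exists>p. u \<in> S c p"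
  shows "\<exists>K. A \<subseteq> TB c K"
  using assms
proof (induction A rule: finite_induct)
  case empty thus ?case by auto
next
  case (insert x F)
  then obtain K where K: "F \<subseteq> TB c K" by auto
  obtain p where p: "x \<in> S c p" using insert by auto
  have "F \<subseteq> TB c (max K (Suc p))" using K TB_mono[of K "max K (Suc p)" c] by auto
  moreover have "x \<in> TB c (max K (Suc p))" unfolding TB_def using p by (intro CollectI exI[of _ p]) auto
  ultimately show ?case by blast
qed

context
  fixes c assumes st: "stable n R c" and bu: "burns c"
begin

lemma tm_S: assumes "v \<le> n" shows "v \<in> S c (tm c v)"
proof -
  have "v \<in> {0..n}" using assms by simp
  then obtain p where "v \<in> S c p" using bu unfolding burns_def by blast
  thus ?thesis unfolding tm_def by (rule LeastI)
qed

lemma S_tm: "S c p = {v \<in> {0..n}. tm c v = p}"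
proof
  show "S c p \<subseteq> {v \<in> {0..n}. tm c v = p}"
  proof
    fix v assume v: "v \<in> S c p"
    have "v \<in> {0..n}" using S_range v by blast
    moreover have "tm c v = p" using tm_eq[OF st v] .
    ultimately show "v \<in> {v \<in> {0..n}. tm c v = p}" by simp
  qed
next
  show "{v \<in> {0..n}. tm c v = p} \<subseteq> S c p"
  proof
    fix v assume "v \<in> {v \<in> {0..n}. tm c v = p}"
    hence "v \<le> n" "tm c v = p" by auto
    thus "v \<in> S c p" using tm_S by metis
  qed
qed

lemma TB_tm: assumes "v \<le> n" shows "v \<in> TB c p \<longleftrightarrow> tm c v < p"
proof
  assume "v \<in> TB c p"
  then obtain q where "q < p" "v \<in> S c q" unfolding TB_def by auto
  thus "tm c v < p" using tm_eq[OF st] by metis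
next
  assume "tm c v < p"
  thus "v \<in> TB c p" unfolding TB_def using tm_S[OF assms] by auto
qed

lemma nb_TB: "nb v - TB c p = {u \<in> nb v. p \<le> tm c u}"
proof -
  have "u \<notin> TB c p \<longleftrightarrow> p \<le> tm c u" if "u \<in> nb v" for u
  proof -
    have "u \<le> n" using that nb_sub by force
    thus ?thesis using TB_tm by (simp add: not_less)
  qed
  thus ?thesis by blast
qed

lemma tm0: assumes "v \<le> n" shows "tm c v = 0 \<longleftrightarrow> v = 0"
proof
  assume "tm c v = 0"
  thus "v = 0" using tm_S[OF assms] S0[of c] by simp
next
  assume "v = 0"
  thus "tm c v = 0" using tm_eq[OF st, of 0 0] S0[of c] by simp
qed

lemma tm_par: assumes "v \<le> n" shows "odd (tm c v) \<longleftrightarrow> v \<notin> R"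
  using S_parity[OF tm_S[OF assms]] .

lemma adj_par: assumes "adj n R u v" shows "odd (tm c u) \<longleftrightarrow> even (tm c v)"
proof -
  have "u \<le> n" "v \<le> n" "u \<in> R \<longleftrightarrow> v \<notin> R" using adj_range[OF assms] by auto
  thus ?thesis using tm_par by simp
qed

lemma adj_ne: "adj n R u v \<Longrightarrow> tm c u \<noteq> tm c v"
  using adj_par by force

lemma nb_ne: "u \<in> nb v \<Longrightarrow> tm c u \<noteq> tm c v"
  using adj_ne in_nb by blast

lemma cls_tm: "v \<le> n \<Longrightarrow> cls k v \<longleftrightarrow> (even k \<longleftrightarrow> odd (tm c v))"
  using cls_iff tm_par by simp

lemma tm_pos: "v \<in> {1..n} \<Longrightarrow> tm c v \<ge> 1"
  using tm0 by force

lemma lower: assumes v: "v \<in> {1..n}" shows "Lo (tm c) v \<le> c v"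
proof -
  obtain k where k: "tm c v = Suc k" using tm_pos[OF v] by (cases "tm c v") auto
  have "v \<in> S c (Suc k)" using tm_S[of v] v k by simp
  hence "card (nb v - TB c (Suc k)) \<le> c v" using KS[OF st] by blast
  moreover have "nb v - TB c (Suc k) = {u \<in> nb v. tm c v < tm c u}"
    unfolding nb_TB k using nb_ne k by fastforce
  ultimately show ?thesis by (simp add: Lo_def)
qed

lemma upper: assumes v: "v \<in> {1..n}" shows "c v < Up (tm c) v"
proof (cases "tm c v \<le> 2")
  case True
  have "{u \<in> nb v. tm c v \<le> Suc (tm c u)} = nb v"
  proof -
    have "tm c v \<le> Suc (tm c u)" if u: "u \<in> nb v" for u
    proof (cases "tm c v = 2")
      case True
      hence "v \<in> R" using tm_par[of v] v by auto
      hence "u \<notin> R" using u in_nb adj_range by blast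
      have "u \<le> n" using u nb_sub by force
      moreover have "u \<noteq> 0" using \<open>u \<notin> R\<close> zero_R by (cases "u = 0") auto
      ultimately have "tm c u \<noteq> 0" using tm0 by simp
      hence "tm c u \<ge> 1" by simp
      thus ?thesis using True by simp
    next
      case False thus ?thesis using \<open>tm c v \<le> 2\<close> by simp
    qed
    thus ?thesis by auto
  qed
  moreover have "c v < deg n R v" using st v by (simp add: stable_def)
  ultimately show ?thesis by (simp add: Up_def deg_nb)
next
  case False
  define j where "j = tm c v - 3"
  have j: "tm c v = Suc (Suc (Suc j))" using False by (simp add: j_def)
  have vn: "v \<le> n" using v by simp
  have "v \<notin> S c (Suc j)" using tm_S[OF vn] S_disj[OF st, of "Suc j" "tm c v" v] j by simp
  moreover have "cls j v" using cls_tm[OF vn] j by simp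
  moreover have "v \<notin> TB c (Suc j)" using TB_tm[OF vn] j by simp
  ultimately have "\<not> card (nb v - TB c (Suc j)) \<le> c v" using KS[OF st, of v j] v by blast
  moreover have "nb v - TB c (Suc j) = {u \<in> nb v. tm c v \<le> Suc (tm c u)}"
  proof -
    have "Suc j \<le> tm c u \<longleftrightarrow> tm c v \<le> Suc (tm c u)" if u: "u \<in> nb v" for u
    proof -
      have "odd (tm c u) \<longleftrightarrow> even (tm c v)" using adj_par u in_nb by blast
      hence "tm c u \<noteq> Suc j" using j by auto
      thus ?thesis using j by auto
    qed
    thus ?thesis unfolding nb_TB by blast
  qed
  ultimately show ?thesis by (simp add: Up_def)
qed

lemma Up_split: "Up (tm c) v = Lo (tm c) v + Wd (tm c) v"
proof -
  have "{u \<in> nb v. tm c v \<le> Suc (tm c u)} = {u \<in> nb v. tm c v < tm c u} \<union> {u \<in> nb v. Suc (tm c u) = tm c v}"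
    using nb_ne by fastforce
  moreover have "{u \<in> nb v. tm c v < tm c u} \<inter> {u \<in> nb v. Suc (tm c u) = tm c v} = {}" by auto
  ultimately show ?thesis unfolding Up_def Lo_def Wd_def
    by (simp add: card_Un_disjoint)
qed

lemma Wd_pos: assumes "v \<in> {1..n}" shows "Wd (tm c) v \<ge> 1"
  using lower[OF assms] upper[OF assms] Up_split[of v] by linarith

lemma pred_ex: "v \<in> {1..n} \<Longrightarrow> \<exists>u\<in>nb v. Suc (tm c u) = tm c v"
proof -
  assume "v \<in> {1..n}"
  hence "1 \<le> card {u \<in> nb v. Suc (tm c u) = tm c v}" using Wd_pos unfolding Wd_def by blast
  hence "{u \<in> nb v. Suc (tm c u) = tm c v} \<noteq> {}" by (metis card.empty not_one_le_zero)
  thus ?thesis by blast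
qed

lemma all_burn_TB: "\<exists>K. {0..n} \<subseteq> TB c K"
  using fin_burn[of "{0..n}" c] bu by (simp add: burns_def)

end

lemma transfer:
  assumes st: "stable n R c" and bu: "burns c" and cx: "config n x"
    and bd: "\<forall>v\<in>{1..n}. Lo (tm c) v \<le> x v \<and> x v < Up (tm c) v"
  shows "stable n R x \<and> (\<forall>p. S x p = S c p)"
proof -
  have stx: "stable n R x"
    unfolding stable_def
  proof
    fix v assume v: "v \<in> {1..n}"
    have "Up (tm c) v \<le> card (nb v)" unfolding Up_def by (rule card_mono) auto
    moreover have "x v < Up (tm c) v" using bd v by blast
    ultimately show "x v < deg n R v" by (simp add: deg_nb)
  qed
  have "S x p = S c p" for p
  proof (induction p rule: less_induct)
    case (less p)
    show ?case
    proof (cases p)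
      case 0 thus ?thesis by (simp add: S0)
    next
      case (Suc k)
      have TBe: "TB x (Suc k) = TB c (Suc k)" using less Suc by (auto simp: TB_def)
      show ?thesis
      proof
        show "S x p \<subseteq> S c p"
        proof
          fix v assume "v \<in> S x p"
          hence h: "v \<in> {1..n}" "cls k v" "v \<notin> TB c (Suc k)" "card (nb v - TB c (Suc k)) \<le> x v"
            using KS[OF stx] Suc TBe by auto
          have vn: "v \<le> n" using h by simp
          have ge: "Suc k \<le> tm c v" using TB_tm[OF st bu vn] h by simp
          have "tm c v = Suc k"
          proof (rule ccontr)
            assume ne: "tm c v \<noteq> Suc k"
            have "even k \<longleftrightarrow> odd (tm c v)" using cls_tm[OF st bu vn] h by simp
            hence "tm c v \<noteq> Suc (Suc k)" by auto
            hence ge3: "Suc (Suc (Suc k)) \<le> tm c v" using ge ne by linarith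
            have "{u \<in> nb v. tm c v \<le> Suc (tm c u)} \<subseteq> nb v - TB c (Suc k)"
              unfolding nb_TB[OF st bu] using ge3 by auto
            hence "Up (tm c) v \<le> card (nb v - TB c (Suc k))" unfolding Up_def
              by (intro card_mono) auto
            thus False using h bd by fastforce
          qed
          thus "v \<in> S c p" using tm_S[OF st bu vn] Suc by simp
        qed
      next
        show "S c p \<subseteq> S x p"
        proof
          fix v assume v: "v \<in> S c p"
          hence h: "v \<in> {1..n}" "cls k v" "v \<notin> TB c (Suc k)"
            using KS[OF st] Suc by auto
          have vn: "v \<le> n" using h by simp
          have tv: "tm c v = Suc k" using tm_eq[OF st v] Suc by simp
          have "nb v - TB c (Suc k) = {u \<in> nb v. tm c v < tm c u}"
            unfolding nb_TB[OF st bu] tv using nb_ne[OF st bu] tv by fastforce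
          hence "card (nb v - TB c (Suc k)) \<le> x v" using bd h by (simp add: Lo_def)
          thus "v \<in> S x p" using KS[OF stx] h TBe Suc by simp
        qed
      qed
    qed
  qed
  thus ?thesis using stx by blast
qed

end

context FD begin

lemma cmax_d_base:
  assumes W: "W \<subseteq> {1..n}" "W \<noteq> {}"
  shows "\<exists>v\<in>W. card (nb v \<inter> W) \<le> cmax n R v + d v"
proof (rule ccontr)
  assume "\<not> ?thesis"
  hence h: "\<forall>v\<in>W. cmax n R v + d v < card (nb v \<inter> W)" by auto
  have cl: "nb v \<subseteq> W" if v: "v \<in> W" for v
  proof -
    have vr: "v \<in> {1..n}" using W v by auto
    have c1: "card (nb v \<inter> W) \<le> card (nb v)" by (rule card_mono) auto
    have c2: "1 \<le> card (nb v)" using deg_pos[of v] vr by (simp add: deg_nb)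
    have c3: "cmax n R v = card (nb v) - 1" using vr by (simp add: cmax_def deg_nb)
    have "card (nb v) \<le> card (nb v \<inter> W)" using h v c1 c2 c3 by fastforce
    hence "nb v \<inter> W = nb v" by (intro card_seteq) auto
    thus ?thesis by blast
  qed
  obtain v where v: "v \<in> W" using W by blast
  have "0 \<in> W"
  proof (cases "v \<in> R")
    case True
    have "n \<in> nb v" using adj_n[OF True] adj_sym in_nb by simp
    hence nW: "n \<in> W" using cl v by blast
    have "0 \<in> nb n" using zero_nb_col[of n] n_notR by simp
    thus ?thesis using cl[OF nW] by blast
  next
    case False
    have "v \<le> n" using v W by auto
    hence "0 \<in> nb v" using zero_nb_col[of v] False by simp
    thus ?thesis using cl[OF v] by blast
  qed
  thus False using W by auto
qed

lemma noFSC: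
  assumes "(topple_step n R)\<^sup>*\<^sup>* (\<lambda>i. cmax n R i + d i) x"
  shows "\<forall>W. W \<subseteq> {1..n} \<and> W \<noteq> {} \<longrightarrow> (\<exists>v\<in>W. card (nb v \<inter> W) \<le> x v)"
  using assms
proof (induction rule: rtranclp_induct)
  case base
  show ?case using cmax_d_base by blast
next
  case (step y z)
  show ?case
  proof (intro allI impI)
    fix W assume W: "W \<subseteq> {1..n} \<and> W \<noteq> {}"
    from step.hyps(2) obtain v where v: "v \<in> {1..n}" "deg n R v \<le> y v"
      and z: "z = (\<lambda>u. if u = v then y u - deg n R v else if u \<in> {1..n} \<and> adj n R v u then y u + 1 else y u)"
      unfolding topple_step_def by blast
    have zge: "y u \<le> z u" if "u \<noteq> v" for u using z that by auto
    show "\<exists>u\<in>W. card (nb u \<inter> W) \<le> z u"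
    proof (cases "v \<in> W")
      case False
      then obtain u where u: "u \<in> W" "card (nb u \<inter> W) \<le> y u" using step.IH W by blast
      hence "u \<noteq> v" using False by auto
      hence "card (nb u \<inter> W) \<le> z u" using u zge[of u] by linarith
      thus ?thesis using u by blast
    next
      case True
      show ?thesis
      proof (cases "W = {v}")
        case True
        have "nb v \<inter> {v} = {}" using in_nb adj_range by auto
        thus ?thesis using True by auto
      next
        case False
        let ?W' = "W - {v}"
        have "?W' \<subseteq> {1..n} \<and> ?W' \<noteq> {}" using W False True by auto
        then obtain u where u: "u \<in> ?W'" "card (nb u \<inter> ?W') \<le> y u" using step.IH by blast
        have uv: "u \<noteq> v" "u \<in> {1..n}" using u W by auto
        show ?thesis
        proof (cases "adj n R v u")
          case True
          have "nb u \<inter> W \<subseteq> insert v (nb u \<inter> ?W')" by auto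
          hence "card (nb u \<inter> W) \<le> card (insert v (nb u \<inter> ?W'))" by (intro card_mono) auto
          also have "\<dots> \<le> Suc (card (nb u \<inter> ?W'))" by (simp add: card_insert_le_m1)
          finally have "card (nb u \<inter> W) \<le> Suc (y u)" using u by linarith
          moreover have "z u = y u + 1" using z uv True by auto
          ultimately have "card (nb u \<inter> W) \<le> z u" by simp
          moreover have "u \<in> W" using u by simp
          ultimately show ?thesis by blast
        next
          case False
          have "v \<notin> nb u" using False in_nb by simp
          hence "nb u \<inter> W \<subseteq> nb u \<inter> ?W'" by auto
          hence "card (nb u \<inter> W) \<le> card (nb u \<inter> ?W')" by (intro card_mono) auto
          moreover have "z u = y u" using z uv False by auto
          ultimately have "card (nb u \<inter> W) \<le> z u" using u by simp
          moreover have "u \<in> W" using u by simp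
          ultimately show ?thesis by blast
        qed
      qed
    qed
  qed
qed

lemma rec_burns: assumes "c \<in> Rec n R" shows "burns c"
proof (rule ccontr)
  have st: "stable n R c" using assms unfolding Rec_def by blast
  obtain d where d: "(topple_step n R)\<^sup>*\<^sup>* (\<lambda>i. cmax n R i + d i) c"
    using assms unfolding Rec_def by blast
  assume nbu: "\<not> burns c"
  define W where "W = {v \<in> {0..n}. \<forall>p. v \<notin> S c p}"
  have W0: "0 \<notin> W" using S0[of c] by (auto simp: W_def)
  have Wsub: "W \<subseteq> {1..n}"
  proof
    fix v assume "v \<in> W"
    hence "v \<le> n" by (simp add: W_def)
    moreover have "v \<noteq> 0" using W0 \<open>v \<in> W\<close> by (cases "v = 0") simp_all
    ultimately show "v \<in> {1..n}" by simp
  qed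
  have Wne: "W \<noteq> {}" using nbu by (auto simp: burns_def W_def)
  obtain v where v: "v \<in> W" "card (nb v \<inter> W) \<le> c v" using noFSC[OF d] Wsub Wne by blast
  have vr: "v \<in> {1..n}" using v Wsub by auto
  have "\<forall>u\<in>nb v - W. \<exists>p. u \<in> S c p"
  proof
    fix u assume u: "u \<in> nb v - W"
    hence "u \<in> {0..n}" using nb_sub by blast
    thus "\<exists>p. u \<in> S c p" using u unfolding W_def by blast
  qed
  then obtain K where K: "nb v - W \<subseteq> TB c K" using fin_burn[of "nb v - W" c] by auto
  obtain k where k: "k \<ge> K" "cls k v" using exists_cls[of v K] vr by auto
  have "TB c K \<subseteq> TB c (Suc k)" using TB_mono[of K "Suc k" c] k by simp
  hence "nb v - TB c (Suc k) \<subseteq> nb v \<inter> W" using K by auto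
  hence "card (nb v - TB c (Suc k)) \<le> card (nb v \<inter> W)" by (intro card_mono) auto
  hence "card (nb v - TB c (Suc k)) \<le> c v" using v(2) by linarith
  moreover have "v \<notin> TB c (Suc k)" using v(1) by (auto simp: W_def TB_def)
  ultimately have "v \<in> S c (Suc k)" using KS[OF st] vr k by blast
  thus False using v(1) by (auto simp: W_def)
qed

lemma step_mono:
  assumes "topple_step n R y y'"
  shows "topple_step n R (\<lambda>u. y u + e u) (\<lambda>u. y' u + e u)"
proof -
  from assms obtain v where v: "v \<in> {1..n}" "deg n R v \<le> y v"
    and y': "y' = (\<lambda>u. if u = v then y u - deg n R v else if u \<in> {1..n} \<and> adj n R v u then y u + 1 else y u)"
    unfolding topple_step_def by blast
  have "(\<lambda>u. y' u + e u) = (\<lambda>u. if u = v then (y u + e u) - deg n R v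
      else if u \<in> {1..n} \<and> adj n R v u then (y u + e u) + 1 else y u + e u)"
    using v y' by (auto simp: fun_eq_iff)
  moreover have "deg n R v \<le> y v + e v" using v by simp
  ultimately show ?thesis unfolding topple_step_def using v(1) by blast
qed

lemma steps_mono:
  assumes "(topple_step n R)\<^sup>*\<^sup>* y y'"
  shows "(topple_step n R)\<^sup>*\<^sup>* (\<lambda>u. y u + e u) (\<lambda>u. y' u + e u)"
  using assms
proof (induction rule: rtranclp_induct)
  case base thus ?case by simp
next
  case (step a b)
  thus ?case using step_mono[OF step.hyps(2), of e] by (meson rtranclp.rtrancl_into_rtrancl)
qed

lemma ts_steps:
  assumes "finite A" "A \<subseteq> {1..n}" "\<forall>u\<in>A. \<forall>v\<in>A. \<not> adj n R u v" "\<forall>v\<in>A. deg n R v \<le> y v"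
  shows "(topple_step n R)\<^sup>*\<^sup>* y (topple_set n R y A)"
  using assms
proof (induction A rule: finite_induct)
  case empty
  have "topple_set n R y {} = y" by (auto simp: topple_set_def fun_eq_iff)
  thus ?case by simp
next
  case (insert x F)
  let ?t = "topple_set n R y F"
  have IH: "(topple_step n R)\<^sup>*\<^sup>* y ?t" using insert by auto
  have x: "x \<in> {1..n}" "x \<notin> F" using insert by auto
  have nadj: "\<not> adj n R w x" if "w \<in> F" for w using insert.prems(2) that by auto
  have nadj2: "\<not> adj n R x w" if "w \<in> F" for w using insert.prems(2) that by auto
  have e0: "{w \<in> F. adj n R w x} = {}" using nadj by auto
  have c0': "card {w \<in> F. adj n R w x} = 0" by (simp only: e0 card.empty)
  have tx: "?t x = y x" using x c0' by (simp add: topple_set_def)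
  have dx: "deg n R x \<le> ?t x" using tx insert.prems(3) by auto
  have eq: "topple_set n R y (insert x F) = (\<lambda>u. if u = x then ?t u - deg n R x
        else if u \<in> {1..n} \<and> adj n R x u then ?t u + 1 else ?t u)"
  proof
    fix u
    show "topple_set n R y (insert x F) u = (if u = x then ?t u - deg n R x
        else if u \<in> {1..n} \<and> adj n R x u then ?t u + 1 else ?t u)"
    proof (cases "u \<in> {1..n}")
      case False
      hence ux: "u \<noteq> x" using x by auto
      have "topple_set n R y (insert x F) u = y u" by (simp only: topple_set_def if_not_P[OF False])
      moreover have "?t u = y u" by (simp only: topple_set_def if_not_P[OF False])
      moreover have "\<not> (u \<in> {1..n} \<and> adj n R x u)" using False by blast
      ultimately show ?thesis using ux by simp
    next
      case True
      consider "u = x" | "u \<noteq> x" "adj n R x u" | "u \<noteq> x" "\<not> adj n R x u" by blast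
      thus ?thesis
      proof cases
        case 1
        have "{w \<in> insert x F. adj n R w x} = {}" using nadj adj_range by auto
        hence "card {w \<in> insert x F. adj n R w x} = 0" by (simp only: card.empty)
        thus ?thesis using 1 True x tx by (simp add: topple_set_def)
      next
        case 2
        have uF: "u \<notin> F" using 2 nadj2 by blast
        have "{w \<in> insert x F. adj n R w u} = insert x {w \<in> F. adj n R w u}" using 2 adj_sym by auto
        moreover have "x \<notin> {w \<in> F. adj n R w u}" using x by auto
        ultimately have "card {w \<in> insert x F. adj n R w u} = Suc (card {w \<in> F. adj n R w u})"
          using insert.hyps(1) by simp
        thus ?thesis using 2 True uF by (simp add: topple_set_def)
      next
        case 3
        have "{w \<in> insert x F. adj n R w u} = {w \<in> F. adj n R w u}" using 3 adj_sym by auto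
        thus ?thesis using 3 True by (simp add: topple_set_def)
      qed
    qed
  qed
  have "topple_step n R ?t (topple_set n R y (insert x F))"
    unfolding topple_step_def using x(1) dx eq by blast
  thus ?case using IH by (meson rtranclp.rtrancl_into_rtrancl)
qed

lemma cur_step:
  assumes st: "stable n R c"
  shows "(topple_step n R)\<^sup>*\<^sup>* (cur c k) (cur c (Suc k))"
proof -
  have sub: "S c (Suc k) \<subseteq> {1..n}" by (auto simp: S_Suc)
  have ind: "\<forall>u\<in>S c (Suc k). \<forall>v\<in>S c (Suc k). \<not> adj n R u v"
  proof (intro ballI)
    fix u v assume u: "u \<in> S c (Suc k)" and v: "v \<in> S c (Suc k)"
    have "cls k u" "cls k v" "u \<le> n" "v \<le> n" using u v by (auto simp: S_Suc)
    hence "u \<in> R \<longleftrightarrow> v \<in> R" using cls_iff by auto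
    thus "\<not> adj n R u v" using adj_range by blast
  qed
  have "\<forall>v\<in>S c (Suc k). deg n R v \<le> cur c k v" by (auto simp: S_Suc)
  hence "(topple_step n R)\<^sup>*\<^sup>* (cur c k) (topple_set n R (cur c k) (S c (Suc k)))"
    using ts_steps[of "S c (Suc k)" "cur c k"] sub ind finite_subset[OF sub] by blast
  thus ?thesis by (simp add: cur_Suc)
qed

lemma cur_steps:
  assumes st: "stable n R c"
  shows "(topple_step n R)\<^sup>*\<^sup>* (cur c 0) (cur c k)"
proof (induction k)
  case 0 thus ?case by simp
next
  case (Suc k) thus ?case using cur_step[OF st, of k] by (meson rtranclp_trans)
qed

lemma burn_end:
  assumes st: "stable n R c" and bu: "burns c"
  shows "\<exists>K. cur c K = c"
proof -
  obtain K where K: "{0..n} \<subseteq> TB c K" using all_burn_TB[OF st bu] by blast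
  have K': "{0..n} \<subseteq> TB c (Suc K)" using K TB_mono[of K "Suc K" c] by auto
  have pi: "pinv c K" using inv_all[OF st] by blast
  have "cur c K u = c u" for u
  proof (cases "u \<in> {1..n}")
    case True
    have "nb u \<inter> TB c (Suc K) = nb u" using K' nb_sub by blast
    moreover have "u \<in> TB c (Suc K)" using K' True by auto
    ultimately show ?thesis using pinv_eq[OF pi True] by (simp add: deg_nb)
  next
    case False thus ?thesis using pi unfolding pinv_def by blast
  qed
  thus ?thesis by blast
qed

definition bt :: "nat \<Rightarrow> nat" where
  "bt u = (if u \<in> {1..n} \<and> adj n R 0 u then 1 else 0)"

lemma cur0_bt: "cur c 0 = (\<lambda>u. c u + bt u)"
  unfolding cur0 topple_sink_def bt_def fun_eq_iff by simp

lemma mult_steps: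
  assumes st: "stable n R c" and bu: "burns c"
  shows "(topple_step n R)\<^sup>*\<^sup>* (\<lambda>u. c u + m * bt u) c"
proof (induction m)
  case 0 thus ?case by simp
next
  case (Suc m)
  obtain K where K: "cur c K = c" using burn_end[OF st bu] by blast
  have "(topple_step n R)\<^sup>*\<^sup>* (cur c 0) (cur c K)" by (rule cur_steps[OF st])
  hence "(topple_step n R)\<^sup>*\<^sup>* (\<lambda>u. c u + bt u) c" by (simp only: cur0_bt K)
  from steps_mono[OF this, of "\<lambda>u. m * bt u"]
  have "(topple_step n R)\<^sup>*\<^sup>* (\<lambda>u. (c u + bt u) + m * bt u) (\<lambda>u. c u + m * bt u)" .
  moreover have "(\<lambda>u. (c u + bt u) + m * bt u) = (\<lambda>u. c u + Suc m * bt u)" by auto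
  ultimately have "(topple_step n R)\<^sup>*\<^sup>* (\<lambda>u. c u + Suc m * bt u) (\<lambda>u. c u + m * bt u)" by simp
  thus ?case using Suc.IH by (rule rtranclp_trans)
qed

lemma burns_rec:
  assumes cc: "config n c" and st: "stable n R c" and bu: "burns c"
  shows "c \<in> Rec n R"
proof -
  define K where "K = 2 * (n + 1)"
  define Rows where "Rows = R \<inter> {1..n}"
  define y where "y = (\<lambda>u. if u \<in> {1..n} then (if u \<in> R then c u + deg n R u
                         else c u + K + 1 - deg n R u) else 0)"
  have c0: "c u = 0" if "u \<notin> {1..n}" for u using cc that by (simp add: config_def)
  have ty: "topple_set n R y Rows = (\<lambda>u. c u + K * bt u)"
  proof
    fix u
    show "topple_set n R y Rows u = c u + K * bt u"
    proof (cases "u \<in> {1..n}")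
      case False
      have "topple_set n R y Rows u = y u" by (simp only: topple_set_def if_not_P[OF False])
      moreover have "y u = 0" by (simp only: y_def if_not_P[OF False])
      moreover have "bt u = 0" using False unfolding bt_def by auto
      ultimately show ?thesis using c0[OF False] by simp
    next
      case True
      show ?thesis
      proof (cases "u \<in> R")
        case True
        have e: "{w \<in> Rows. adj n R w u} = {}" using True adj_range by (auto simp: Rows_def)
        have "\<not> adj n R 0 u" using True zero_R adj_range by blast
        thus ?thesis using True \<open>u \<in> {1..n}\<close> e by (simp add: topple_set_def y_def bt_def Rows_def)
      next
        case False
        have un: "u \<le> n" using \<open>u \<in> {1..n}\<close> by simp
        have e: "{w \<in> Rows. adj n R w u} = nb u - {0}"
        proof
          show "{w \<in> Rows. adj n R w u} \<subseteq> nb u - {0}"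
          proof
            fix w assume w: "w \<in> {w \<in> Rows. adj n R w u}"
            hence "w \<in> nb u" using in_nb by blast
            moreover have "w \<noteq> 0" using w by (auto simp: Rows_def)
            ultimately show "w \<in> nb u - {0}" by blast
          qed
        next
          show "nb u - {0} \<subseteq> {w \<in> Rows. adj n R w u}"
          proof
            fix w assume w: "w \<in> nb u - {0}"
            hence a: "adj n R w u" using in_nb by blast
            hence "w \<le> n" "w \<in> R" using adj_range[OF a] False by auto
            moreover have "w \<noteq> 0" using w by simp
            ultimately show "w \<in> {w \<in> Rows. adj n R w u}" using a by (simp add: Rows_def)
          qed
        qed
        have z: "0 \<in> nb u" using zero_nb_col[OF un False] .
        have "card (nb u - {0}) = card (nb u) - 1" using z by simp
        hence ce: "card {w \<in> Rows. adj n R w u} = deg n R u - 1" using e by (simp add: deg_nb)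
        have dl: "deg n R u \<le> Suc n" "1 \<le> deg n R u" using deg_le deg_pos[OF un] by auto
        have "u \<notin> Rows" using False by (simp add: Rows_def)
        moreover have "adj n R 0 u" using adj0[OF un False] .
        ultimately show ?thesis using \<open>u \<in> {1..n}\<close> False ce dl
          by (simp add: topple_set_def y_def bt_def K_def)
      qed
    qed
  qed
  have s1: "(topple_step n R)\<^sup>*\<^sup>* y (topple_set n R y Rows)"
  proof (rule ts_steps)
    show "finite Rows" by (simp add: Rows_def)
    show "Rows \<subseteq> {1..n}" by (auto simp: Rows_def)
    show "\<forall>u\<in>Rows. \<forall>v\<in>Rows. \<not> adj n R u v" using adj_range by (auto simp: Rows_def)
    show "\<forall>v\<in>Rows. deg n R v \<le> y v" by (auto simp: Rows_def y_def)
  qed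
  define d where "d = (\<lambda>u. if u \<in> {1..n} then y u - cmax n R u else 0)"
  have yd: "(\<lambda>i. cmax n R i + d i) = y"
  proof
    fix u
    show "cmax n R u + d u = y u"
    proof (cases "u \<in> {1..n}")
      case False
      have "d u = 0" by (simp only: d_def if_not_P[OF False])
      moreover have "cmax n R u = 0" by (simp only: cmax_def if_not_P[OF False])
      moreover have "y u = 0" by (simp only: y_def if_not_P[OF False])
      ultimately show ?thesis by simp
    next
      case True
      have dl: "deg n R u \<le> Suc n" using deg_le by auto
      have "cmax n R u \<le> y u"
      proof (cases "u \<in> R")
        case True thus ?thesis using \<open>u \<in> {1..n}\<close> by (simp add: cmax_def y_def)
      next
        case False
        have "cmax n R u = deg n R u - 1" "y u = c u + K + 1 - deg n R u"
          using \<open>u \<in> {1..n}\<close> False by (simp_all add: cmax_def y_def)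
        thus ?thesis using dl unfolding K_def by arith
      qed
      thus ?thesis using True by (simp add: d_def)
    qed
  qed
  have dc: "config n d" by (simp add: config_def d_def)
  have "(topple_step n R)\<^sup>*\<^sup>* y (\<lambda>u. c u + K * bt u)" using s1 ty by simp
  hence "(topple_step n R)\<^sup>*\<^sup>* y c" using mult_steps[OF st bu, of K] by (rule rtranclp_trans)
  hence "(topple_step n R)\<^sup>*\<^sup>* (\<lambda>i. cmax n R i + d i) c" using yd by simp
  thus ?thesis unfolding Rec_def using cc st dc by blast
qed

lemma Rec_iff: "c \<in> Rec n R \<longleftrightarrow> config n c \<and> stable n R c \<and> burns c"
  using rec_burns burns_rec unfolding Rec_def by blast

end

context FD begin

definition pr :: "(nat \<Rightarrow> nat \<Rightarrow> bool) \<Rightarrow> nat \<Rightarrow> nat \<Rightarrow> bool" where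
  "pr T u v \<longleftrightarrow> (cell n R u v \<and> T u v) \<or> (cell n R v u \<and> \<not> T v u)"

lemma cell_lt: "cell n R i j \<Longrightarrow> i < j" by (simp add: cell_iff)

lemma pr_nb: "u \<in> nb v \<longleftrightarrow> pr T u v \<or> pr T v u"
  unfolding in_nb adj_iff pr_def by blast

lemma pr_asym: "pr T u v \<Longrightarrow> \<not> pr T v u"
  unfolding pr_def using cell_lt by (meson less_asym)

lemma pr_in_nb: "pr T u v \<Longrightarrow> u \<in> nb v"
  using pr_nb by blast

lemma succ_sub: "{u. pr T v u} \<subseteq> nb v"
  using pr_nb by blast

lemma pred_sub: "{u. pr T u v} \<subseteq> nb v"
  using pr_nb by blast

lemma fin_succ: "finite {u. pr T v u}"
  by (rule finite_subset[OF succ_sub nb_fin])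

lemma phiTC_succ:
  assumes v: "v \<in> {1..n}"
  shows "phiTC n R T v = card {u. pr T v u}"
proof (cases "v \<in> R")
  case True
  have "{u. pr T v u} = {j. cell n R v j \<and> T v j}"
    using True unfolding pr_def by (auto simp: cell_iff)
  thus ?thesis using True v by (simp add: phiTC_def)
next
  case False
  have "{u. pr T v u} = {k. cell n R k v \<and> \<not> T k v}"
    using False unfolding pr_def by (auto simp: cell_iff)
  thus ?thesis using False v by (simp add: phiTC_def)
qed

context
  fixes T assumes EW: "T \<in> EWtab n R"
begin

lemma EW_cell: "T i j \<Longrightarrow> cell n R i j" using EW by (simp add: EWtab_def)
lemma EW_top: "cell n R 0 j \<Longrightarrow> T 0 j" using EW by (simp add: EWtab_def)
lemma EW_row: "i \<in> R \<Longrightarrow> i \<noteq> 0 \<Longrightarrow> \<exists>j. cell n R i j \<and> \<not> T i j" using EW by (simp add: EWtab_def)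
lemma EW_rect: "i < i' \<Longrightarrow> j < j' \<Longrightarrow> cell n R i j \<Longrightarrow> cell n R i j' \<Longrightarrow> cell n R i' j \<Longrightarrow> cell n R i' j' \<Longrightarrow>
        \<not> (\<not> T i j \<and> \<not> T i' j' \<and> T i j' \<and> T i' j) \<and> \<not> (\<not> T i j' \<and> \<not> T i' j \<and> T i j \<and> T i' j')"
  using EW unfolding EWtab_def by blast

lemma no_pred0: "\<not> pr T u 0"
  unfolding pr_def using EW_top cell_lt by (metis not_less0)

lemma pred_ex_T: assumes v: "v \<in> {1..n}" shows "\<exists>u. pr T u v"
proof (cases "v \<in> R")
  case True
  obtain j where "cell n R v j" "\<not> T v j" using EW_row[OF True] v by auto
  thus ?thesis unfolding pr_def by blast
next
  case False
  have "cell n R 0 v" using False zero_R v by (auto simp: cell_iff)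
  thus ?thesis using EW_top unfolding pr_def by blast
qed

lemma stable_T: "stable n R (phiTC n R T)"
  unfolding stable_def
proof
  fix v assume v: "v \<in> {1..n}"
  obtain u where u: "pr T u v" using pred_ex_T[OF v] by blast
  have "{w. pr T v w} \<subset> nb v" using succ_sub u pr_asym pr_in_nb by blast
  hence "card {w. pr T v w} < card (nb v)" by (intro psubset_card_mono) auto
  thus "phiTC n R T v < deg n R v" using phiTC_succ[OF v] by (simp add: deg_nb)
qed

lemma config_T: "config n (phiTC n R T)"
  by (simp add: config_def phiTC_def)

lemma EW_noW:
  "W \<subseteq> {1..n} \<Longrightarrow> (\<forall>v\<in>W. \<exists>u\<in>W. pr T u v) \<Longrightarrow> W = {}"
proof (induction "card W" arbitrary: W rule: less_induct)
  case less
  show ?case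
  proof (rule ccontr)
    assume ne: "W \<noteq> {}"
    have finW: "finite W" using less.prems(1) finite_subset[of W "{1..n}"] by simp
    have WR: "W \<inter> R \<noteq> {}"
    proof -
      obtain v where v: "v \<in> W" using ne by blast
      show ?thesis
      proof (cases "v \<in> R")
        case True thus ?thesis using v by blast
      next
        case False
        obtain u where u: "u \<in> W" "pr T u v" using less.prems(2) v by blast
        hence "u \<in> R" using False unfolding pr_def by (auto simp: cell_iff)
        thus ?thesis using u by blast
      qed
    qed
    define i where "i = Min (W \<inter> R)"
    have iW: "i \<in> W" "i \<in> R" using Min_in[of "W \<inter> R"] WR finW by (auto simp: i_def)
    have imin: "i \<le> r" if "r \<in> W" "r \<in> R" for r using Min_le[of "W \<inter> R" r] finW that by (auto simp: i_def)
    define Z where "Z = {c \<in> W. c \<notin> R \<and> cell n R i c \<and> \<not> T i c}"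
    define RZ where "RZ = {r \<in> W. r \<in> R \<and> r \<noteq> i \<and> (\<exists>c\<in>Z. cell n R r c \<and> T r c)}"
    define Q where "Q = Z \<union> RZ"
    have QW: "Q \<subseteq> W - {i}" using iW by (auto simp: Q_def Z_def RZ_def)
    hence "card Q \<le> card (W - {i})" using finW by (intro card_mono) auto
    moreover have "card (W - {i}) < card W" using finW iW(1) by (rule card_Diff1_less)
    ultimately have Qlt: "card Q < card W" by linarith
    have Qsub: "Q \<subseteq> {1..n}" using QW less.prems(1) by blast
    have Qcl: "\<forall>v\<in>Q. \<exists>u\<in>Q. pr T u v"
    proof
      fix v assume "v \<in> Q"
      hence "v \<in> Z \<or> v \<in> RZ" by (simp add: Q_def)
      thus "\<exists>u\<in>Q. pr T u v"
      proof
        assume vZ: "v \<in> Z"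
        hence vW: "v \<in> W" and vR: "v \<notin> R" and niv: "\<not> T i v" by (auto simp: Z_def)
        obtain r where r: "r \<in> W" "pr T r v" using less.prems(2) vW by blast
        have rc: "cell n R r v" "T r v" using r(2) vR unfolding pr_def by (auto simp: cell_iff)
        have "r \<in> R" using rc by (simp add: cell_iff)
        moreover have "r \<noteq> i" using rc niv by auto
        ultimately have "r \<in> RZ" using r rc vZ by (auto simp: RZ_def)
        thus ?thesis using r by (auto simp: Q_def)
      next
        assume vRZ: "v \<in> RZ"
        then obtain c where vW: "v \<in> W" and vR: "v \<in> R" and vi: "v \<noteq> i"
          and cZ: "c \<in> Z" and cc: "cell n R v c" "T v c" by (auto simp: RZ_def)
        have cZ': "c \<notin> R" "cell n R i c" "\<not> T i c" using cZ by (auto simp: Z_def)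
        obtain c' where c': "c' \<in> W" "pr T c' v" using less.prems(2) vW by blast
        have cc': "cell n R v c'" "\<not> T v c'" using c'(2) vR unfolding pr_def by (auto simp: cell_iff)
        have iv: "i < v" using imin[OF vW vR] vi by simp
        have ic': "cell n R i c'" using cc' iW(2) iv by (auto simp: cell_iff)
        have ne': "c \<noteq> c'" using cc cc' by auto
        have "\<not> T i c'"
        proof (cases "c < c'")
          case True
          show ?thesis using EW_rect[OF iv True cZ'(2) ic' cc(1) cc'(1)] cZ'(3) cc'(2) cc(2) by blast
        next
          case False
          hence lt: "c' < c" using ne' by simp
          show ?thesis using EW_rect[OF iv lt ic' cZ'(2) cc'(1) cc(1)] cZ'(3) cc'(2) cc(2) by blast
        qed
        hence "c' \<in> Z" using c'(1) ic' cc' by (auto simp: Z_def cell_iff)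
        thus ?thesis using c' by (auto simp: Q_def)
      qed
    qed
    have "Q \<noteq> {}"
    proof -
      obtain u where u: "u \<in> W" "pr T u i" using less.prems(2) iW by blast
      have "cell n R i u" "\<not> T i u" using u(2) iW(2) unfolding pr_def by (auto simp: cell_iff)
      hence "u \<in> Z" using u(1) by (auto simp: Z_def cell_iff)
      thus ?thesis by (auto simp: Q_def)
    qed
    moreover have "Q = {}" using less.hyps[OF Qlt Qsub Qcl] .
    ultimately show False by blast
  qed
qed

abbreviation "cT \<equiv> phiTC n R T"

lemma pred_closed: "\<forall>v\<in>S cT p. \<forall>u. pr T u v \<longrightarrow> u \<in> TB cT p"
proof (induction p rule: less_induct)
  case (less p)
  show ?case
  proof (cases p)
    case 0 thus ?thesis using no_pred0 by (simp add: S0)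
  next
    case (Suc k)
    show ?thesis
    proof (intro ballI allI impI)
      fix v u assume v: "v \<in> S cT p" and u: "pr T u v"
      have h: "v \<in> {1..n}" "v \<notin> TB cT (Suc k)" "card (nb v - TB cT (Suc k)) \<le> cT v"
        using KS[OF stable_T] v Suc by auto
      have A: "pr T w v" if w: "w \<in> nb v" "w \<in> TB cT (Suc k)" for w
      proof (rule ccontr)
        assume "\<not> pr T w v"
        hence pw: "pr T v w" using w pr_nb by blast
        obtain q where q: "q < Suc k" "w \<in> S cT q" using w(2) by (auto simp: TB_def)
        have "v \<in> TB cT q" using less.IH[of q] q pw Suc by auto
        hence "v \<in> TB cT (Suc k)" using TB_mono[of q "Suc k"] q by auto
        thus False using h by blast
      qed
      have sub: "{w. pr T v w} \<subseteq> nb v - TB cT (Suc k)"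
        using A pr_asym succ_sub by blast
      have "card (nb v - TB cT (Suc k)) \<le> card {w. pr T v w}" using h phiTC_succ by simp
      hence eq: "{w. pr T v w} = nb v - TB cT (Suc k)"
        by (intro card_seteq[OF _ sub]) auto
      have "u \<in> nb v" using u pr_in_nb by blast
      moreover have "u \<notin> {w. pr T v w}" using u pr_asym by blast
      ultimately show "u \<in> TB cT p" using eq Suc by blast
    qed
  qed
qed

lemma burns_T: "burns cT"
proof -
  define W where "W = {v \<in> {0..n}. \<forall>p. v \<notin> S cT p}"
  have W0: "0 \<notin> W" using S0[of cT] by (auto simp: W_def)
  have Wsub: "W \<subseteq> {1..n}"
  proof
    fix v assume vW: "v \<in> W"
    hence "v \<le> n" by (simp add: W_def)
    moreover have "v \<noteq> 0" using W0 vW by (cases "v = 0") simp_all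
    ultimately show "v \<in> {1..n}" by simp
  qed
  have "\<forall>v\<in>W. \<exists>u\<in>W. pr T u v"
  proof (rule ballI, rule ccontr)
    fix v assume vW: "v \<in> W" and nex: "\<not> (\<exists>u\<in>W. pr T u v)"
    have vr: "v \<in> {1..n}" using vW Wsub by blast
    have "\<forall>u\<in>{u. pr T u v}. \<exists>p. u \<in> S cT p"
    proof
      fix u assume "u \<in> {u. pr T u v}"
      hence "u \<in> nb v" "u \<notin> W" using nex pr_in_nb vW by blast+
      hence "u \<in> {0..n}" "u \<notin> W" using nb_sub by blast+
      thus "\<exists>p. u \<in> S cT p" unfolding W_def by blast
    qed
    moreover have "finite {u. pr T u v}" by (rule finite_subset[OF pred_sub nb_fin])
    ultimately obtain K where K: "{u. pr T u v} \<subseteq> TB cT K" using fin_burn by blast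
    obtain k where k: "k \<ge> K" "cls k v" using exists_cls[of v K] vr by auto
    have K': "{u. pr T u v} \<subseteq> TB cT (Suc k)" using K TB_mono[of K "Suc k" cT] k by auto
    have "nb v - TB cT (Suc k) \<subseteq> {u. pr T v u}" using K' pr_nb by blast
    hence "card (nb v - TB cT (Suc k)) \<le> card {u. pr T v u}" using fin_succ by (intro card_mono) auto
    hence "card (nb v - TB cT (Suc k)) \<le> cT v" using phiTC_succ[OF vr] by simp
    moreover have "v \<notin> TB cT (Suc k)" using vW by (auto simp: W_def TB_def)
    ultimately have "v \<in> S cT (Suc k)" using KS[OF stable_T] vr k by blast
    thus False using vW by (auto simp: W_def)
  qed
  hence "W = {}" using EW_noW Wsub by blast
  thus ?thesis unfolding burns_def W_def by blast
qed

lemma pr_tm: assumes "pr T u v" shows "tm cT u < tm cT v"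
proof -
  have "u \<in> nb v" using assms pr_in_nb by blast
  hence "v \<in> nb u" using in_nb adj_sym by blast
  hence vn: "v \<le> n" using nb_sub by force
  have "u \<in> TB cT (tm cT v)" using pred_closed tm_S[OF stable_T burns_T vn] assms by blast
  moreover have "u \<le> n" using \<open>u \<in> nb v\<close> nb_sub by force
  ultimately show ?thesis using TB_tm[OF stable_T burns_T] by blast
qed

lemma T_tm: assumes "cell n R i j" shows "T i j \<longleftrightarrow> tm cT i < tm cT j"
proof
  assume "T i j" thus "tm cT i < tm cT j" using pr_tm assms unfolding pr_def by blast
next
  assume lt: "tm cT i < tm cT j"
  show "T i j"
  proof (rule ccontr)
    assume "\<not> T i j"
    hence "pr T j i" using assms unfolding pr_def by blast
    thus False using pr_tm lt by fastforce
  qed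
qed

lemma T_Lo: assumes v: "v \<in> {1..n}" shows "cT v = Lo (tm cT) v"
proof -
  have "{u. pr T v u} = {u \<in> nb v. tm cT v < tm cT u}"
  proof
    show "{u. pr T v u} \<subseteq> {u \<in> nb v. tm cT v < tm cT u}" using pr_tm succ_sub by blast
    show "{u \<in> nb v. tm cT v < tm cT u} \<subseteq> {u. pr T v u}"
    proof
      fix u assume u: "u \<in> {u \<in> nb v. tm cT v < tm cT u}"
      hence "\<not> pr T u v" using pr_tm by fastforce
      thus "u \<in> {u. pr T v u}" using u pr_nb by blast
    qed
  qed
  thus ?thesis using phiTC_succ[OF v] by (simp add: Lo_def)
qed

end

lemma phiTC_inj: "inj_on (phiTC n R) (EWtab n R)"
proof (rule inj_onI)
  fix T1 T2 assume T1: "T1 \<in> EWtab n R" and T2: "T2 \<in> EWtab n R" and eq: "phiTC n R T1 = phiTC n R T2"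
  show "T1 = T2"
  proof (intro ext)
    fix i j
    show "T1 i j = T2 i j"
    proof (cases "cell n R i j")
      case True
      thus ?thesis using T_tm[OF T1 True] T_tm[OF T2 True] eq by simp
    next
      case False
      thus ?thesis using EW_cell[OF T1] EW_cell[OF T2] by blast
    qed
  qed
qed

lemma phiCT_phiTC: "T \<in> EWtab n R \<Longrightarrow> phiCT n R (phiTC n R T) = T"
  unfolding phiCT_def by (rule the_inv_into_f_f[OF phiTC_inj])

end

context FD begin

definition Tof :: "(nat \<Rightarrow> nat) \<Rightarrow> nat \<Rightarrow> nat \<Rightarrow> bool" where
  "Tof t i j \<longleftrightarrow> cell n R i j \<and> t i < t j"

lemma cell_adj: "cell n R i j \<Longrightarrow> adj n R i j" by (simp add: adj_iff)

lemma Ublk_S: "Ublk n R c i = S c (2 * i)" by (simp add: Ublk_def S_def)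
lemma Vblk_S: "Vblk n R c i = (if i = 0 then {} else S c (2 * i - 1))" by (simp add: Vblk_def S_def)

context
  fixes x assumes st: "stable n R x" and bu: "burns x"
begin

lemma cell_tm_ne: "cell n R i j \<Longrightarrow> tm x i \<noteq> tm x j"
  using adj_ne[OF st bu] cell_adj by blast

lemma Tof_EW: "Tof (tm x) \<in> EWtab n R"
proof -
  have f1: "\<forall>i j. Tof (tm x) i j \<longrightarrow> cell n R i j" by (simp add: Tof_def)
  have f2: "\<forall>j. cell n R 0 j \<longrightarrow> Tof (tm x) 0 j"
  proof (intro allI impI)
    fix j assume c: "cell n R 0 j"
    hence "j \<le> n" "j \<noteq> 0" by (auto simp: cell_iff)
    hence "tm x j \<noteq> 0" using tm0[OF st bu] by simp
    moreover have "tm x 0 = 0" using tm0[OF st bu] by simp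
    ultimately show "Tof (tm x) 0 j" using c by (simp add: Tof_def)
  qed
  have f3: "\<forall>i\<in>R. i \<noteq> 0 \<longrightarrow> (\<exists>j. cell n R i j \<and> \<not> Tof (tm x) i j)"
  proof (intro ballI impI)
    fix i assume i: "i \<in> R" "i \<noteq> 0"
    have "i \<le> n" using i R_sub by auto
    hence ir: "i \<in> {1..n}" using i by simp
    obtain u where u: "u \<in> nb i" "Suc (tm x u) = tm x i" using pred_ex[OF st bu ir] by blast
    have "cell n R i u" using u(1) nb_row[OF i(1)] by simp
    moreover have "\<not> Tof (tm x) i u" using u(2) by (simp add: Tof_def)
    ultimately show "\<exists>j. cell n R i j \<and> \<not> Tof (tm x) i j" by blast
  qed
  have f4: "\<forall>i i' j j'. i < i' \<and> j < j' \<and> cell n R i j \<and> cell n R i j' \<and> cell n R i' j \<and> cell n R i' j' \<longrightarrow>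
        \<not> (\<not> Tof (tm x) i j \<and> \<not> Tof (tm x) i' j' \<and> Tof (tm x) i j' \<and> Tof (tm x) i' j) \<and>
        \<not> (\<not> Tof (tm x) i j' \<and> \<not> Tof (tm x) i' j \<and> Tof (tm x) i j \<and> Tof (tm x) i' j')"
  proof (intro allI impI)
    fix i i' j j'
    assume h: "i < i' \<and> j < j' \<and> cell n R i j \<and> cell n R i j' \<and> cell n R i' j \<and> cell n R i' j'"
    have ne: "tm x i \<noteq> tm x j" "tm x i \<noteq> tm x j'" "tm x i' \<noteq> tm x j" "tm x i' \<noteq> tm x j'"
      using h cell_tm_ne by auto
    show "\<not> (\<not> Tof (tm x) i j \<and> \<not> Tof (tm x) i' j' \<and> Tof (tm x) i j' \<and> Tof (tm x) i' j) \<and>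
        \<not> (\<not> Tof (tm x) i j' \<and> \<not> Tof (tm x) i' j \<and> Tof (tm x) i j \<and> Tof (tm x) i' j')"
      using h ne unfolding Tof_def by linarith
  qed
  show ?thesis unfolding EWtab_def using f1 f2 f3 f4 by (intro CollectI conjI)
qed

lemma Tof_phiTC: assumes v: "v \<in> {1..n}" shows "phiTC n R (Tof (tm x)) v = Lo (tm x) v"
proof (cases "v \<in> R")
  case True
  have "{j. cell n R v j \<and> Tof (tm x) v j} = {u \<in> nb v. tm x v < tm x u}"
    using nb_row[OF True] by (auto simp: Tof_def)
  thus ?thesis using True v by (simp add: phiTC_def Lo_def)
next
  case False
  have ee: "(cell n R k v \<and> \<not> Tof (tm x) k v) \<longleftrightarrow> (cell n R k v \<and> tm x v < tm x k)" for k
  proof (cases "cell n R k v")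
    case True
    hence "tm x k \<noteq> tm x v" by (rule cell_tm_ne)
    thus ?thesis using True by (auto simp: Tof_def)
  qed simp
  have "{k. cell n R k v \<and> \<not> Tof (tm x) k v} = {u \<in> nb v. tm x v < tm x u}"
    using nb_col[OF False] ee by auto
  thus ?thesis using False v by (simp add: phiTC_def Lo_def)
qed

lemma minrec_Lo: assumes j: "j \<in> {1..n}" shows "minrec n R x j = Lo (tm x) j"
proof -
  have jn: "j \<le> n" using j by simp
  let ?t = "tm x"
  have U_iff: "(\<exists>i. j \<in> Ublk n R x i) \<longleftrightarrow> even (?t j)"
  proof
    assume "\<exists>i. j \<in> Ublk n R x i"
    then obtain i where "j \<in> S x (2 * i)" by (auto simp: Ublk_S)
    thus "even (?t j)" using tm_eq[OF st] by fastforce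
  next
    assume e: "even (?t j)"
    have "j \<in> S x (2 * (?t j div 2))" using tm_S[OF st bu jn] e by simp
    thus "\<exists>i. j \<in> Ublk n R x i" by (auto simp: Ublk_S)
  qed
  show ?thesis
  proof (cases "even (?t j)")
    case True
    have jR: "j \<in> R" using tm_par[OF st bu jn] True by simp
    have "{l. \<exists>i k. j \<in> Ublk n R x i \<and> k > i \<and> l \<in> Vblk n R x k \<and> j < l} = {u \<in> nb j. ?t j < ?t u}"
    proof
      show "{l. \<exists>i k. j \<in> Ublk n R x i \<and> k > i \<and> l \<in> Vblk n R x k \<and> j < l} \<subseteq> {u \<in> nb j. ?t j < ?t u}"
      proof
        fix l assume "l \<in> {l. \<exists>i k. j \<in> Ublk n R x i \<and> k > i \<and> l \<in> Vblk n R x k \<and> j < l}"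
        then obtain i k where h: "j \<in> S x (2 * i)" "k > i" "l \<in> S x (2 * k - 1)" "j < l"
          by (auto simp: Ublk_S Vblk_S split: if_splits)
        have tj: "?t j = 2 * i" using tm_eq[OF st h(1)] .
        have tl: "?t l = 2 * k - 1" using tm_eq[OF st h(3)] .
        have ln: "l \<le> n" using h(3) S_range by force
        have lR: "l \<notin> R" using tm_par[OF st bu ln] tl h(2) by simp
        have "cell n R j l" using jR lR ln h(4) by (simp add: cell_iff)
        hence "l \<in> nb j" using nb_row[OF jR] by simp
        moreover have "?t j < ?t l" using tj tl h(2) by simp
        ultimately show "l \<in> {u \<in> nb j. ?t j < ?t u}" by simp
      qed
    next
      show "{u \<in> nb j. ?t j < ?t u} \<subseteq> {l. \<exists>i k. j \<in> Ublk n R x i \<and> k > i \<and> l \<in> Vblk n R x k \<and> j < l}"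
      proof
        fix u assume u: "u \<in> {u \<in> nb j. ?t j < ?t u}"
        have cu: "cell n R j u" using u nb_row[OF jR] by simp
        hence un: "u \<le> n" "u \<notin> R" "j < u" by (auto simp: cell_iff)
        have ou: "odd (?t u)" using tm_par[OF st bu un(1)] un(2) by simp
        define i where "i = ?t j div 2"
        define k where "k = (?t u + 1) div 2"
        have "j \<in> S x (2 * i)" using tm_S[OF st bu jn] True by (simp add: i_def)
        moreover have "k > i" "k \<noteq> 0" using u ou True by (auto simp: i_def k_def)
        moreover have "u \<in> S x (2 * k - 1)" using tm_S[OF st bu un(1)] ou by (simp add: k_def)
        ultimately have "j \<in> Ublk n R x i" "k > i" "u \<in> Vblk n R x k" by (simp_all add: Ublk_S Vblk_S)
        thus "u \<in> {l. \<exists>i k. j \<in> Ublk n R x i \<and> k > i \<and> l \<in> Vblk n R x k \<and> j < l}"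
          using un(3) by blast
      qed
    qed
    thus ?thesis using j U_iff True by (simp add: minrec_def Lo_def)
  next
    case False
    have jR: "j \<notin> R" using tm_par[OF st bu jn] False by simp
    have "{l. \<exists>i k. j \<in> Vblk n R x i \<and> k \<ge> i \<and> l \<in> Ublk n R x k \<and> j > l} = {u \<in> nb j. ?t j < ?t u}"
    proof
      show "{l. \<exists>i k. j \<in> Vblk n R x i \<and> k \<ge> i \<and> l \<in> Ublk n R x k \<and> j > l} \<subseteq> {u \<in> nb j. ?t j < ?t u}"
      proof
        fix l assume "l \<in> {l. \<exists>i k. j \<in> Vblk n R x i \<and> k \<ge> i \<and> l \<in> Ublk n R x k \<and> j > l}"
        then obtain i k where h: "i \<noteq> 0" "j \<in> S x (2 * i - 1)" "k \<ge> i" "l \<in> S x (2 * k)" "l < j"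
          by (auto simp: Ublk_S Vblk_S split: if_splits)
        have tj: "?t j = 2 * i - 1" using tm_eq[OF st h(2)] .
        have tl: "?t l = 2 * k" using tm_eq[OF st h(4)] .
        have ln: "l \<le> n" using h(4) S_range by force
        have lR: "l \<in> R" using tm_par[OF st bu ln] tl by simp
        have "cell n R l j" using jR lR jn h(5) by (simp add: cell_iff)
        hence "l \<in> nb j" using nb_col[OF jR] by simp
        moreover have "?t j < ?t l" using tj tl h(1,3) by simp
        ultimately show "l \<in> {u \<in> nb j. ?t j < ?t u}" by simp
      qed
    next
      show "{u \<in> nb j. ?t j < ?t u} \<subseteq> {l. \<exists>i k. j \<in> Vblk n R x i \<and> k \<ge> i \<and> l \<in> Ublk n R x k \<and> j > l}"
      proof
        fix u assume u: "u \<in> {u \<in> nb j. ?t j < ?t u}"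
        have cu: "cell n R u j" using u nb_col[OF jR] by simp
        hence un: "u \<le> n" "u \<in> R" "u < j" using jn by (auto simp: cell_iff)
        have eu: "even (?t u)" using tm_par[OF st bu un(1)] un(2) by simp
        define i where "i = (?t j + 1) div 2"
        define k where "k = ?t u div 2"
        have "j \<in> S x (2 * i - 1)" using tm_S[OF st bu jn] False by (simp add: i_def)
        moreover have "k \<ge> i" "i \<noteq> 0" using u eu False by (auto simp: i_def k_def)
        moreover have "u \<in> S x (2 * k)" using tm_S[OF st bu un(1)] eu by (simp add: k_def)
        ultimately have "j \<in> Vblk n R x i" "k \<ge> i" "u \<in> Ublk n R x k" by (simp_all add: Ublk_S Vblk_S)
        thus "u \<in> {l. \<exists>i k. j \<in> Vblk n R x i \<and> k \<ge> i \<and> l \<in> Ublk n R x k \<and> j > l}"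
          using un(3) by blast
      qed
    qed
    thus ?thesis using j U_iff False by (simp add: minrec_def Lo_def)
  qed
qed

end
end

context FD begin

definition psi :: "(nat \<Rightarrow> nat) \<Rightarrow> nat list" where
  "psi c = concat (map (\<lambda>i. sorted_list_of_set (Vblk n R c i) @ rev (sorted_list_of_set (Ublk n R c i))) [1..<n+1])"

lemma Psi_psi: "Psi n R T = psi (phiTC n R T)" by (simp add: Psi_def psi_def)

definition kl :: "(nat \<Rightarrow> nat) \<Rightarrow> nat \<Rightarrow> nat \<Rightarrow> bool" where
  "kl t u v \<longleftrightarrow> t u < t v \<or> (t u = t v \<and> (if odd (t u) then u < v else v < u))"

lemma kl_le: "kl t u v \<Longrightarrow> t u \<le> t v" by (auto simp: kl_def)
lemma kl_irrefl: "\<not> kl t u u" by (auto simp: kl_def)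

lemma sorted_concat:
  assumes "sorted_wrt (<) xs" "\<forall>i\<in>set xs. sorted_wrt r (f i)"
    "\<forall>i j. i < j \<longrightarrow> (\<forall>a\<in>set (f i). \<forall>b\<in>set (f j). r a b)"
  shows "sorted_wrt r (concat (map f xs))"
  using assms
proof (induction xs)
  case Nil thus ?case by simp
next
  case (Cons x xs)
  have "\<forall>a\<in>set (f x). \<forall>b\<in>set (concat (map f xs)). r a b" using Cons.prems by auto
  thus ?case using Cons by (auto simp: sorted_wrt_append)
qed

lemma S_fin: "finite (S c p)" by (rule finite_subset[OF S_range]) simp

lemma V_fin: "finite (Vblk n R c i)" by (simp add: Vblk_S S_fin)
lemma U_fin: "finite (Ublk n R c i)" by (simp add: Ublk_S S_fin)

context
  fixes c assumes st: "stable n R c" and bu: "burns c"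
begin

lemma realize: "v \<le> n \<Longrightarrow> s \<le> tm c v \<Longrightarrow> \<exists>w\<le>n. tm c w = s"
proof (induction "tm c v - s" arbitrary: v)
  case 0 thus ?case by auto
next
  case (Suc d)
  have "tm c v \<noteq> 0" using Suc by simp
  hence "v \<noteq> 0" using tm0[OF st bu Suc.prems(1)] by simp
  hence vr: "v \<in> {1..n}" using Suc.prems by simp
  obtain u where u: "u \<in> nb v" "Suc (tm c u) = tm c v" using pred_ex[OF st bu vr] by blast
  have un: "u \<le> n" using u nb_sub by force
  have "d = tm c u - s" "s \<le> tm c u" using Suc u by auto
  thus ?case using Suc.hyps(1)[OF _ un] by blast
qed

lemma tm_le: assumes v: "v \<le> n" shows "tm c v \<le> n"
proof -
  have "{0..tm c v} \<subseteq> tm c ` {0..n}"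
  proof
    fix s assume "s \<in> {0..tm c v}"
    then obtain w where "w \<le> n" "tm c w = s" using realize[OF v] by auto
    thus "s \<in> tm c ` {0..n}" by force
  qed
  hence "card {0..tm c v} \<le> card (tm c ` {0..n})" by (intro card_mono) auto
  also have "\<dots> \<le> card {0..n}" by (rule card_image_le) simp
  finally show ?thesis by simp
qed

lemma S_iff: "v \<in> S c p \<longleftrightarrow> v \<le> n \<and> tm c v = p"
proof
  assume h: "v \<in> S c p"
  have "v \<in> {0..n}" using S_range h by blast
  thus "v \<le> n \<and> tm c v = p" using tm_eq[OF st h] by simp
next
  assume "v \<le> n \<and> tm c v = p"
  thus "v \<in> S c p" using tm_S[OF st bu] by metis
qed

lemma V_tm: "v \<in> Vblk n R c i \<longleftrightarrow> i \<noteq> 0 \<and> v \<le> n \<and> tm c v = 2 * i - 1"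
  by (simp add: Vblk_S S_iff)

lemma U_tm: "v \<in> Ublk n R c i \<longleftrightarrow> v \<le> n \<and> tm c v = 2 * i"
  by (simp add: Ublk_S S_iff)

lemma mem_psi: "v \<in> set (psi c) \<longleftrightarrow> (\<exists>i\<in>{1..n}. v \<in> Vblk n R c i \<or> v \<in> Ublk n R c i)"
  unfolding psi_def by (auto simp: V_fin U_fin)

lemma set_psi: "set (psi c) = {1..n}"
proof
  show "set (psi c) \<subseteq> {1..n}"
  proof
    fix v assume "v \<in> set (psi c)"
    then obtain i where i: "i \<in> {1..n}" "v \<in> Vblk n R c i \<or> v \<in> Ublk n R c i" using mem_psi by blast
    hence "v \<le> n" "tm c v \<noteq> 0" using V_tm U_tm by auto
    hence "v \<noteq> 0" using tm0[OF st bu] by auto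
    thus "v \<in> {1..n}" using \<open>v \<le> n\<close> by simp
  qed
next
  show "{1..n} \<subseteq> set (psi c)"
  proof
    fix v assume v: "v \<in> {1..n}"
    hence vn: "v \<le> n" by simp
    have t1: "tm c v \<ge> 1" using tm0[OF st bu vn] v by (cases "tm c v") auto
    have t2: "tm c v \<le> n" using tm_le[OF vn] .
    define i where "i = (tm c v + 1) div 2"
    have ir: "i \<in> {1..n}" using t1 t2 by (auto simp: i_def)
    have "v \<in> Vblk n R c i \<or> v \<in> Ublk n R c i"
    proof (cases "odd (tm c v)")
      case True
      hence "tm c v = 2 * i - 1" "i \<noteq> 0" using ir by (auto simp: i_def)
      thus ?thesis using V_tm vn by auto
    next
      case False
      hence "tm c v = 2 * i" by (auto simp: i_def)
      thus ?thesis using U_tm vn by auto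
    qed
    thus "v \<in> set (psi c)" using mem_psi ir by blast
  qed
qed

lemma psi_sorted: "sorted_wrt (kl (tm c)) (psi c)"
  unfolding psi_def
proof (rule sorted_concat)
  show "sorted_wrt (<) [1..<n+1]" by (rule sorted_wrt_upt)
next
  show "\<forall>i\<in>set [1..<n+1]. sorted_wrt (kl (tm c)) (sorted_list_of_set (Vblk n R c i) @ rev (sorted_list_of_set (Ublk n R c i)))"
  proof
    fix i assume "i \<in> set [1..<n+1]"
    have A: "sorted_wrt (kl (tm c)) (sorted_list_of_set (Vblk n R c i))"
    proof (rule sorted_wrt_mono_rel[OF _ strict_sorted_list_of_set])
      fix x y assume "x \<in> set (sorted_list_of_set (Vblk n R c i))" "y \<in> set (sorted_list_of_set (Vblk n R c i))" "x < y"
      hence "x \<in> Vblk n R c i" "y \<in> Vblk n R c i" "x < y" using V_fin by auto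
      thus "kl (tm c) x y" using V_tm by (auto simp: kl_def)
    qed
    have B: "sorted_wrt (kl (tm c)) (rev (sorted_list_of_set (Ublk n R c i)))"
      unfolding sorted_wrt_rev
    proof (rule sorted_wrt_mono_rel[OF _ strict_sorted_list_of_set])
      fix x y assume "x \<in> set (sorted_list_of_set (Ublk n R c i))" "y \<in> set (sorted_list_of_set (Ublk n R c i))" "x < y"
      hence "x \<in> Ublk n R c i" "y \<in> Ublk n R c i" "x < y" using U_fin by auto
      thus "kl (tm c) y x" using U_tm by (auto simp: kl_def)
    qed
    have C: "\<forall>a\<in>set (sorted_list_of_set (Vblk n R c i)). \<forall>b\<in>set (rev (sorted_list_of_set (Ublk n R c i))). kl (tm c) a b"
      using V_tm U_tm V_fin U_fin by (auto simp: kl_def)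
    show "sorted_wrt (kl (tm c)) (sorted_list_of_set (Vblk n R c i) @ rev (sorted_list_of_set (Ublk n R c i)))"
      using A B C by (simp add: sorted_wrt_append)
  qed
next
  show "\<forall>i j. i < j \<longrightarrow> (\<forall>a\<in>set (sorted_list_of_set (Vblk n R c i) @ rev (sorted_list_of_set (Ublk n R c i))).
     \<forall>b\<in>set (sorted_list_of_set (Vblk n R c j) @ rev (sorted_list_of_set (Ublk n R c j))). kl (tm c) a b)"
  proof (intro allI impI ballI)
    fix i j a b assume ij: "i < j"
      and a: "a \<in> set (sorted_list_of_set (Vblk n R c i) @ rev (sorted_list_of_set (Ublk n R c i)))"
      and b: "b \<in> set (sorted_list_of_set (Vblk n R c j) @ rev (sorted_list_of_set (Ublk n R c j)))"
    have "tm c a \<le> 2 * i" using a V_tm U_tm V_fin U_fin by auto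
    moreover have "tm c b \<ge> 2 * j - 1" using b V_tm U_tm V_fin U_fin by auto
    moreover have "2 * j - 1 \<ge> 2 * i + 1" using ij by arith
    ultimately have "tm c a < tm c b" by linarith
    thus "kl (tm c) a b" by (simp add: kl_def)
  qed
qed

lemma psi_distinct: "distinct (psi c)"
proof -
  have "psi c ! i \<noteq> psi c ! j" if "i < j" "j < length (psi c)" for i j
    using sorted_wrt_nth_less[OF psi_sorted that] kl_irrefl by metis
  thus ?thesis unfolding distinct_conv_nth by (metis linorder_neqE_nat)
qed

lemma psi_len: "length (psi c) = n"
  using distinct_card[OF psi_distinct] set_psi by simp

lemma psi_perm: "is_perm n (psi c)"
  using psi_distinct set_psi by (simp add: is_perm_def)

abbreviation "\<pi> \<equiv> psi c"

lemma pos_in: "p < n \<Longrightarrow> \<pi> ! p \<in> {1..n}"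
  using nth_mem[of p \<pi>] psi_len set_psi by simp

lemma pos_of: "v \<in> {1..n} \<Longrightarrow> \<exists>m<n. \<pi> ! m = v"
  using set_psi psi_len by (metis in_set_conv_nth)

lemma kl_nth: "r < q \<Longrightarrow> q < n \<Longrightarrow> kl (tm c) (\<pi> ! r) (\<pi> ! q)"
  using sorted_wrt_nth_less[OF psi_sorted] psi_len by simp

lemma P1: assumes "0 < n" shows "tm c (\<pi> ! 0) = 1"
proof -
  have nn: "n \<le> n" by simp
  have "1 \<le> tm c n" using tm0[OF st bu nn] n_pos by (cases "tm c n") auto
  then obtain w where w: "w \<le> n" "tm c w = 1" using realize[OF nn] by blast
  hence "w \<noteq> 0" using tm0[OF st bu w(1)] by simp
  hence "w \<in> {1..n}" using w by simp
  then obtain m where m: "m < n" "\<pi> ! m = w" using pos_of by blast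
  have "tm c (\<pi> ! 0) \<le> 1"
  proof (cases "m = 0")
    case True thus ?thesis using m w by simp
  next
    case False thus ?thesis using kl_le[OF kl_nth[of 0 m]] m w by simp
  qed
  moreover have "\<pi> ! 0 \<in> {1..n}" using pos_in assms by blast
  hence "tm c (\<pi> ! 0) \<noteq> 0" using tm0[OF st bu] by auto
  ultimately show ?thesis by simp
qed

lemma P2: assumes q: "Suc q < n"
  shows "tm c (\<pi> ! Suc q) = tm c (\<pi> ! q) \<or> tm c (\<pi> ! Suc q) = Suc (tm c (\<pi> ! q))"
proof (rule ccontr)
  assume ne: "\<not> ?thesis"
  let ?a = "\<pi> ! q" and ?b = "\<pi> ! Suc q"
  have le: "tm c ?a \<le> tm c ?b" using kl_le[OF kl_nth[OF _ q]] by simp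
  hence gt: "Suc (Suc (tm c ?a)) \<le> tm c ?b" using ne by linarith
  have bn: "?b \<le> n" using pos_in[OF q] by simp
  obtain w where w: "w \<le> n" "tm c w = Suc (tm c ?a)" using realize[OF bn, of "Suc (tm c ?a)"] gt by auto
  hence "w \<noteq> 0" using tm0[OF st bu w(1)] by simp
  hence "w \<in> {1..n}" using w by simp
  then obtain m where m: "m < n" "\<pi> ! m = w" using pos_of by blast
  have "m < q \<or> m = q \<or> m = Suc q \<or> Suc q < m" by arith
  thus False
  proof (elim disjE)
    assume "m < q" thus False using kl_le[OF kl_nth[of m q]] q m w by simp
  next
    assume "m = q" thus False using m w by simp
  next
    assume "m = Suc q" thus False using m w gt by simp
  next
    assume "Suc q < m" thus False using kl_le[OF kl_nth[of "Suc q" m]] m w gt by simp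
  qed
qed

lemma P3: assumes p: "p < n" shows "asc_pos \<pi> p \<longleftrightarrow> odd (tm c (\<pi> ! p))"
proof (cases p)
  case 0 thus ?thesis using P1 p by (simp add: asc_pos_def)
next
  case (Suc q)
  let ?a = "\<pi> ! q" and ?b = "\<pi> ! Suc q"
  have q: "Suc q < n" using p Suc by simp
  have asc: "asc_pos \<pi> p \<longleftrightarrow> ?a < ?b" using Suc by (simp add: asc_pos_def)
  have klab: "kl (tm c) ?a ?b" using kl_nth[OF _ q] by simp
  have ar: "?a \<in> {1..n}" and br: "?b \<in> {1..n}" using pos_in q by auto
  from P2[OF q] show ?thesis
  proof
    assume eq: "tm c ?b = tm c ?a"
    thus ?thesis using klab asc Suc by (auto simp: kl_def)
  next
    assume eq: "tm c ?b = Suc (tm c ?a)"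
    obtain u where u: "u \<in> nb ?b" "Suc (tm c u) = tm c ?b" using pred_ex[OF st bu br] by blast
    have tu: "tm c u = tm c ?a" using u eq by simp
    have un: "u \<le> n" using u nb_sub by force
    have "tm c ?a \<noteq> 0" using tm0[OF st bu] ar by auto
    hence "u \<noteq> 0" using tu tm0[OF st bu un] by auto
    hence "u \<in> {1..n}" using un by simp
    then obtain m where m: "m < n" "\<pi> ! m = u" using pos_of by blast
    have mq: "m \<le> q"
    proof (rule ccontr)
      assume "\<not> m \<le> q"
      hence "m = Suc q \<or> Suc q < m" by arith
      thus False
      proof
        assume "m = Suc q" thus False using m tu eq by simp
      next
        assume "Suc q < m" thus False using kl_le[OF kl_nth[of "Suc q" m]] m tu eq by simp
      qed
    qed
    have bn: "?b \<le> n" using br by simp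
    show ?thesis
    proof (cases "odd (tm c ?a)")
      case True
      have "?b \<in> R" using tm_par[OF st bu bn] eq True by simp
      hence "cell n R ?b u" using u(1) nb_row by blast
      hence bu': "?b < u" by (simp add: cell_iff)
      have "u \<le> ?a"
      proof (cases "m = q")
        case True thus ?thesis using m by simp
      next
        case False
        hence "kl (tm c) u ?a" using kl_nth[of m q] m mq q by simp
        thus ?thesis using tu True by (simp add: kl_def)
      qed
      thus ?thesis using asc bu' eq True Suc by auto
    next
      case False
      have "?b \<notin> R" using tm_par[OF st bu bn] eq False by simp
      hence "cell n R u ?b" using u(1) nb_col by blast
      hence ub: "u < ?b" by (simp add: cell_iff)
      have "?a \<le> u"
      proof (cases "m = q")
        case True thus ?thesis using m by simp
      next
        case False
        hence "kl (tm c) u ?a" using kl_nth[of m q] m mq q by simp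
        thus ?thesis using tu \<open>\<not> odd (tm c ?a)\<close> by (simp add: kl_def)
      qed
      thus ?thesis using asc ub eq False Suc by auto
    qed
  qed
qed

lemma P4: "p < n \<Longrightarrow> run_no \<pi> p = tm c (\<pi> ! p)"
proof (induction p)
  case 0
  have "{q. 1 \<le> q \<and> q \<le> 0 \<and> asc_pos \<pi> q \<noteq> asc_pos \<pi> (q - 1)} = {}" by auto
  thus ?case using P1 0 by (simp add: run_no_def)
next
  case (Suc p)
  define A where "A p = {q. 1 \<le> q \<and> q \<le> p \<and> asc_pos \<pi> q \<noteq> asc_pos \<pi> (q - 1)}" for p
  have finA: "finite (A p)" by (rule finite_subset[of _ "{..p}"]) (auto simp: A_def)
  have nA: "Suc p \<notin> A p" by (simp add: A_def)
  have sw: "asc_pos \<pi> (Suc p) \<noteq> asc_pos \<pi> p \<longleftrightarrow> tm c (\<pi> ! Suc p) = Suc (tm c (\<pi> ! p))"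
    using P3[OF Suc.prems] P3[of p] Suc.prems P2[OF Suc.prems] by auto
  have IH: "run_no \<pi> p = tm c (\<pi> ! p)" using Suc by simp
  show ?case
  proof (cases "asc_pos \<pi> (Suc p) \<noteq> asc_pos \<pi> p")
    case True
    have "A (Suc p) = insert (Suc p) (A p)" using True by (auto simp: A_def)
    hence "card (A (Suc p)) = Suc (card (A p))" using finA nA by simp
    thus ?thesis using IH True sw unfolding run_no_def A_def by simp
  next
    case False
    have "A (Suc p) = A p" using False by (auto simp: A_def le_Suc_eq)
    moreover have "tm c (\<pi> ! Suc p) = tm c (\<pi> ! p)" using False sw P2[OF Suc.prems] by auto
    ultimately show ?thesis using IH unfolding run_no_def A_def by simp
  qed
qed

lemma Ablk_eq: "Ablk \<pi> l = {v \<in> {0..n}. tm c v + 1 = 2 * l}"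
proof (cases "l = 0")
  case True thus ?thesis by (simp add: Ablk_def)
next
  case False
  have "{\<pi> ! p | p. p < length \<pi> \<and> asc_pos \<pi> p \<and> run_no \<pi> p = 2 * l - 1} = {v \<in> {0..n}. tm c v + 1 = 2 * l}"
  proof
    show "{\<pi> ! p | p. p < length \<pi> \<and> asc_pos \<pi> p \<and> run_no \<pi> p = 2 * l - 1} \<subseteq> {v \<in> {0..n}. tm c v + 1 = 2 * l}"
      using P3 P4 pos_in psi_len False by fastforce
  next
    show "{v \<in> {0..n}. tm c v + 1 = 2 * l} \<subseteq> {\<pi> ! p | p. p < length \<pi> \<and> asc_pos \<pi> p \<and> run_no \<pi> p = 2 * l - 1}"
    proof
      fix v assume v: "v \<in> {v \<in> {0..n}. tm c v + 1 = 2 * l}"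
      have vn: "v \<le> n" using v by simp
      have "tm c v + 1 = 2 * l" using v by simp
      hence "tm c v \<noteq> 0" using False by presburger
      hence "v \<noteq> 0" using tm0[OF st bu vn] by simp
      hence "v \<in> {1..n}" using v by simp
      then obtain m where m: "m < n" "\<pi> ! m = v" using pos_of by blast
      have tv: "tm c v + 1 = 2 * l" using v by simp
      hence "even (tm c v + 1)" by simp
      hence "odd (tm c v)" by simp
      hence "asc_pos \<pi> m" using P3[OF m(1)] m by simp
      moreover have "run_no \<pi> m = 2 * l - 1" using P4[OF m(1)] m tv by simp
      ultimately have "asc_pos \<pi> m" "run_no \<pi> m = 2 * l - 1" by blast+
      thus "v \<in> {\<pi> ! p | p. p < length \<pi> \<and> asc_pos \<pi> p \<and> run_no \<pi> p = 2 * l - 1}"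
        using m psi_len by auto
    qed
  qed
  thus ?thesis using False by (simp add: Ablk_def)
qed

lemma Dblk_eq: "Dblk \<pi> l = {v \<in> {0..n}. tm c v = 2 * l}"
proof (cases "l = 0")
  case True thus ?thesis using tm0[OF st bu] by (auto simp: Dblk_def)
next
  case False
  have "{\<pi> ! p | p. p < length \<pi> \<and> \<not> asc_pos \<pi> p \<and> run_no \<pi> p = 2 * l} = {v \<in> {0..n}. tm c v = 2 * l}"
  proof
    show "{\<pi> ! p | p. p < length \<pi> \<and> \<not> asc_pos \<pi> p \<and> run_no \<pi> p = 2 * l} \<subseteq> {v \<in> {0..n}. tm c v = 2 * l}"
      using P4 pos_in psi_len by fastforce
  next
    show "{v \<in> {0..n}. tm c v = 2 * l} \<subseteq> {\<pi> ! p | p. p < length \<pi> \<and> \<not> asc_pos \<pi> p \<and> run_no \<pi> p = 2 * l}"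
    proof
      fix v assume v: "v \<in> {v \<in> {0..n}. tm c v = 2 * l}"
      have vn: "v \<le> n" using v by simp
      have "tm c v = 2 * l" using v by simp
      hence "tm c v \<noteq> 0" using False by presburger
      hence "v \<noteq> 0" using tm0[OF st bu vn] by simp
      hence "v \<in> {1..n}" using v by simp
      then obtain m where m: "m < n" "\<pi> ! m = v" using pos_of by blast
      have "\<not> asc_pos \<pi> m" "run_no \<pi> m = 2 * l" using P3[OF m(1)] P4[OF m(1)] m v by auto
      thus "v \<in> {\<pi> ! p | p. p < length \<pi> \<and> \<not> asc_pos \<pi> p \<and> run_no \<pi> p = 2 * l}"
        using m psi_len by auto
    qed
  qed
  thus ?thesis using False by (simp add: Dblk_def)
qed

end
end

context FD begin

lemma tm_cong: "(\<forall>p. S x p = S c p) \<Longrightarrow> tm x = tm c"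
  unfolding tm_def by (simp add: fun_eq_iff)

lemma burns_cong: "(\<forall>p. S x p = S c p) \<Longrightarrow> burns c \<Longrightarrow> burns x"
  unfolding burns_def by simp

context
  fixes c assumes st: "stable n R c" and bu: "burns c"
begin

lemma in_D: "v \<in> {1..n} \<Longrightarrow> v \<in> Dblk (psi c) l \<longleftrightarrow> tm c v = 2 * l"
  using Dblk_eq[OF st bu] by auto

lemma in_A: "v \<in> {1..n} \<Longrightarrow> v \<in> Ablk (psi c) l \<longleftrightarrow> tm c v + 1 = 2 * l"
  using Ablk_eq[OF st bu] by auto

lemma A_sub: "Ablk (psi c) l \<subseteq> {0..n}" using Ablk_eq[OF st bu] by auto
lemma D_sub: "Dblk (psi c) l \<subseteq> {0..n}" using Dblk_eq[OF st bu] by auto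

lemma Wd_row: assumes i: "i \<in> {1..n}" and ti: "tm c i = 2 * l"
  shows "Wd (tm c) i = card {j \<in> Ablk (psi c) l. i < j}"
proof -
  have iN: "i \<le> n" using i by simp
  have iR: "i \<in> R" using tm_par[OF st bu iN] ti by simp
  have "{u \<in> nb i. Suc (tm c u) = tm c i} = {j \<in> Ablk (psi c) l. i < j}"
  proof
    show "{u \<in> nb i. Suc (tm c u) = tm c i} \<subseteq> {j \<in> Ablk (psi c) l. i < j}"
    proof
      fix u assume u: "u \<in> {u \<in> nb i. Suc (tm c u) = tm c i}"
      have "cell n R i u" using u nb_row[OF iR] by simp
      hence "i < u" "u \<le> n" by (auto simp: cell_iff)
      thus "u \<in> {j \<in> Ablk (psi c) l. i < j}" using u ti Ablk_eq[OF st bu] by auto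
    qed
  next
    show "{j \<in> Ablk (psi c) l. i < j} \<subseteq> {u \<in> nb i. Suc (tm c u) = tm c i}"
    proof
      fix j assume j: "j \<in> {j \<in> Ablk (psi c) l. i < j}"
      hence jn: "j \<le> n" and tj: "tm c j + 1 = 2 * l" and ij: "i < j" using Ablk_eq[OF st bu] by auto
      have "even (tm c j + 1)" using tj by simp
      hence "odd (tm c j)" by simp
      hence "j \<notin> R" using tm_par[OF st bu jn] by simp
      hence "cell n R i j" using iR jn ij by (simp add: cell_iff)
      hence "j \<in> nb i" using nb_row[OF iR] by simp
      thus "j \<in> {u \<in> nb i. Suc (tm c u) = tm c i}" using tj ti by simp
    qed
  qed
  thus ?thesis by (simp add: Wd_def)
qed

lemma Wd_col: assumes i: "i \<in> {1..n}" and ti: "tm c i + 1 = 2 * l"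
  shows "Wd (tm c) i = card {j \<in> Dblk (psi c) (l - 1). j < i}"
proof -
  have iN: "i \<le> n" using i by simp
  have "even (tm c i + 1)" using ti by simp
  hence "odd (tm c i)" by simp
  hence iR: "i \<notin> R" using tm_par[OF st bu iN] by simp
  have l1: "l \<ge> 1" using ti by simp
  have "{u \<in> nb i. Suc (tm c u) = tm c i} = {j \<in> Dblk (psi c) (l - 1). j < i}"
  proof
    show "{u \<in> nb i. Suc (tm c u) = tm c i} \<subseteq> {j \<in> Dblk (psi c) (l - 1). j < i}"
    proof
      fix u assume u: "u \<in> {u \<in> nb i. Suc (tm c u) = tm c i}"
      have "cell n R u i" using u nb_col[OF iR] by simp
      hence "u < i" "u \<le> n" using iN by (auto simp: cell_iff)
      moreover have "tm c u = 2 * (l - 1)" using u ti l1 by auto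
      ultimately show "u \<in> {j \<in> Dblk (psi c) (l - 1). j < i}" using Dblk_eq[OF st bu] by auto
    qed
  next
    show "{j \<in> Dblk (psi c) (l - 1). j < i} \<subseteq> {u \<in> nb i. Suc (tm c u) = tm c i}"
    proof
      fix j assume j: "j \<in> {j \<in> Dblk (psi c) (l - 1). j < i}"
      hence jn: "j \<le> n" and tj: "tm c j = 2 * (l - 1)" and ji: "j < i" using Dblk_eq[OF st bu] by auto
      have "j \<in> R" using tm_par[OF st bu jn] tj by simp
      hence "cell n R j i" using iR iN ji by (simp add: cell_iff)
      hence "j \<in> nb i" using nb_col[OF iR] by simp
      moreover have "Suc (tm c j) = tm c i" using tj ti l1 by simp
      ultimately show "j \<in> {u \<in> nb i. Suc (tm c u) = tm c i}" by simp
    qed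
  qed
  thus ?thesis by (simp add: Wd_def)
qed

lemma mu_Wd: assumes i: "i \<in> {1..n}" shows "mu (psi c) i = Wd (tm c) i"
proof (cases "even (tm c i)")
  case True
  define l where "l = tm c i div 2"
  have tl: "tm c i = 2 * l" using True by (simp add: l_def)
  have ex: "\<exists>l. i \<in> Dblk (psi c) l" using in_D[OF i] tl by blast
  have th: "(THE l. i \<in> Dblk (psi c) l) = l"
    using in_D[OF i] tl by (intro the_equality) auto
  show ?thesis using ex th Wd_row[OF i tl] by (simp add: mu_def)
next
  case False
  define l where "l = (tm c i + 1) div 2"
  have tl: "tm c i + 1 = 2 * l" using False by (simp add: l_def)
  have ex: "\<not> (\<exists>l. i \<in> Dblk (psi c) l)" using in_D[OF i] False by auto
  have th: "(THE l. i \<in> Ablk (psi c) l) = l"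
    using in_A[OF i] tl by (intro the_equality) auto
  show ?thesis using ex th Wd_col[OF i tl] by (simp add: mu_def)
qed

lemma canon_iff:
  "canonical_decorated_perm n (psi c) a \<longleftrightarrow> (\<forall>i\<in>{1..n}. 0 \<le> a i \<and> a i < int (Wd (tm c) i))"
proof
  assume h: "canonical_decorated_perm n (psi c) a"
  show "\<forall>i\<in>{1..n}. 0 \<le> a i \<and> a i < int (Wd (tm c) i)"
    using h mu_Wd unfolding canonical_decorated_perm_def decorated_perm_def by auto
next
  assume h: "\<forall>i\<in>{1..n}. 0 \<le> a i \<and> a i < int (Wd (tm c) i)"
  have dp: "decorated_perm n (psi c) a"
    unfolding decorated_perm_def
  proof (intro conjI ballI allI impI)
    show "is_perm n (psi c)" using psi_perm[OF st bu] .
  next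
    fix i assume i: "i \<in> {1..n}"
    show "0 \<le> a i" using h i by blast
  next
    fix i l assume i: "i \<in> {1..n}" and il: "i \<in> Dblk (psi c) l"
    have tl: "tm c i = 2 * l" using in_D[OF i] il by simp
    have "card {j \<in> Ablk (psi c) l. i < j} \<le> card {j. \<exists>k. k \<le> l \<and> j \<in> Ablk (psi c) k \<and> j > i}"
    proof (rule card_mono)
      show "finite {j. \<exists>k. k \<le> l \<and> j \<in> Ablk (psi c) k \<and> j > i}"
        by (rule finite_subset[of _ "{0..n}"]) (use A_sub in auto)
      show "{j \<in> Ablk (psi c) l. i < j} \<subseteq> {j. \<exists>k. k \<le> l \<and> j \<in> Ablk (psi c) k \<and> j > i}" by auto
    qed
    thus "a i < int (card {j. \<exists>k. k \<le> l \<and> j \<in> Ablk (psi c) k \<and> j > i})"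
      using h i Wd_row[OF i tl] by fastforce
  next
    fix i l assume i: "i \<in> {1..n}" and il: "i \<in> Ablk (psi c) l"
    have tl: "tm c i + 1 = 2 * l" using in_A[OF i] il by simp
    have l1: "l - 1 < l" using tl by simp
    have "card {j \<in> Dblk (psi c) (l - 1). j < i} \<le> card {j. \<exists>k. k < l \<and> j \<in> Dblk (psi c) k \<and> j < i}"
    proof (rule card_mono)
      show "finite {j. \<exists>k. k < l \<and> j \<in> Dblk (psi c) k \<and> j < i}"
        by (rule finite_subset[of _ "{..<i}"]) auto
      show "{j \<in> Dblk (psi c) (l - 1). j < i} \<subseteq> {j. \<exists>k. k < l \<and> j \<in> Dblk (psi c) k \<and> j < i}"
        using l1 by auto
    qed
    thus "a i < int (card {j. \<exists>k. k < l \<and> j \<in> Dblk (psi c) k \<and> j < i})"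
      using h i Wd_col[OF i tl] by fastforce
  qed
  show "canonical_decorated_perm n (psi c) a"
    unfolding canonical_decorated_perm_def using dp h mu_Wd by auto
qed

end
end

theorem corollary5p5:
  fixes n :: nat and R :: "nat set" and T :: "nat \<Rightarrow> nat \<Rightarrow> bool" and a :: "nat \<Rightarrow> int"
  assumes "ferrers n R"
    and "T \<in> EWtab n R"
    and "\<forall>i. i \<notin> {1..n} \<longrightarrow> a i = 0"
  shows "(T, a) \<in> RecEW n R \<longleftrightarrow> canonical_decorated_perm n (Psi n R T) a"
proof -
  interpret FD n R using assms(1) by (unfold_locales)
  note EW = assms(2)
  define c where "c = phiTC n R T"
  have stc: "stable n R c" using stable_T[OF EW] by (simp add: c_def)
  have buc: "burns c" using burns_T[OF EW] by (simp add: c_def)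
  have cc: "config n c" using config_T[OF EW] by (simp add: c_def)
  have cLo: "c v = Lo (tm c) v" if "v \<in> {1..n}" for v using T_Lo[OF EW that] by (simp add: c_def)
  have c0: "c v = 0" if "v \<notin> {1..n}" for v using cc that by (simp add: config_def)
  have canon: "canonical_decorated_perm n (Psi n R T) a \<longleftrightarrow> (\<forall>i\<in>{1..n}. 0 \<le> a i \<and> a i < int (Wd (tm c) i))"
    using canon_iff[OF stc buc] by (simp add: Psi_psi c_def)
  show ?thesis
  proof
    assume "(T, a) \<in> RecEW n R"
    then obtain x where xR: "x \<in> Rec n R" and Tx: "T = phiCT n R (minrec n R x)"
      and ax: "a = (\<lambda>i. if i \<in> {1..n} then int (x i) - int (minrec n R x i) else 0)"
      unfolding RecEW_def by auto
    have cx: "config n x" and stx: "stable n R x" and bux: "burns x" using xR Rec_iff by auto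
    have mr: "minrec n R x = (\<lambda>v. if v \<in> {1..n} then Lo (tm x) v else 0)"
    proof
      fix v show "minrec n R x v = (if v \<in> {1..n} then Lo (tm x) v else 0)"
      proof (cases "v \<in> {1..n}")
        case True thus ?thesis using minrec_Lo[OF stx bux True] by simp
      next
        case False
        have "minrec n R x v = 0" by (simp only: minrec_def if_not_P[OF False] if_False)
        moreover have "(if v \<in> {1..n} then Lo (tm x) v else 0) = 0" by (simp only: if_not_P[OF False])
        ultimately show ?thesis by simp
      qed
    qed
    have pT: "phiTC n R (Tof (tm x)) = minrec n R x"
    proof
      fix v show "phiTC n R (Tof (tm x)) v = minrec n R x v"
      proof (cases "v \<in> {1..n}")
        case True thus ?thesis using Tof_phiTC[OF stx bux True] mr by simp
      next
        case False
        have "phiTC n R (Tof (tm x)) v = 0" by (simp only: phiTC_def if_not_P[OF False])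
        moreover have "minrec n R x v = 0" by (simp only: minrec_def if_not_P[OF False] if_False)
        ultimately show ?thesis by simp
      qed
    qed
    have "T = Tof (tm x)" using Tx pT phiCT_phiTC[OF Tof_EW[OF stx bux]] by simp
    hence cm: "c = minrec n R x" using pT by (simp add: c_def)
    have bd: "\<forall>v\<in>{1..n}. Lo (tm x) v \<le> c v \<and> c v < Up (tm x) v"
    proof
      fix v assume v: "v \<in> {1..n}"
      have "c v = Lo (tm x) v" using cm mr v by simp
      moreover have "1 \<le> Wd (tm x) v" using Wd_pos[OF stx bux v] .
      ultimately show "Lo (tm x) v \<le> c v \<and> c v < Up (tm x) v" using Up_split[OF stx bux, of v] by simp
    qed
    have "\<forall>p. S c p = S x p" using transfer[OF stx bux cc bd] by blast
    hence tme: "tm c = tm x" by (rule tm_cong)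
    have "\<forall>i\<in>{1..n}. 0 \<le> a i \<and> a i < int (Wd (tm c) i)"
    proof
      fix i assume i: "i \<in> {1..n}"
      have "a i = int (x i) - int (Lo (tm x) i)" using ax mr i by simp
      moreover have "Lo (tm x) i \<le> x i" using lower[OF stx bux i] .
      moreover have "x i < Lo (tm x) i + Wd (tm x) i" using upper[OF stx bux i] Up_split[OF stx bux, of i] by simp
      ultimately show "0 \<le> a i \<and> a i < int (Wd (tm c) i)" using tme by simp
    qed
    thus "canonical_decorated_perm n (Psi n R T) a" using canon by simp
  next
    assume "canonical_decorated_perm n (Psi n R T) a"
    hence ha: "\<forall>i\<in>{1..n}. 0 \<le> a i \<and> a i < int (Wd (tm c) i)" using canon by simp
    define x where "x = (\<lambda>i. c i + nat (a i))"
    have cx: "config n x" unfolding config_def x_def using c0 assms(3) by simp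
    have bd: "\<forall>v\<in>{1..n}. Lo (tm c) v \<le> x v \<and> x v < Up (tm c) v"
    proof
      fix v assume v: "v \<in> {1..n}"
      have "x v = Lo (tm c) v + nat (a v)" using cLo[OF v] by (simp add: x_def)
      moreover have "0 \<le> a v" "a v < int (Wd (tm c) v)" using ha v by blast+
      hence "nat (a v) < Wd (tm c) v" by (simp add: nat_less_iff)
      ultimately show "Lo (tm c) v \<le> x v \<and> x v < Up (tm c) v" using Up_split[OF stc buc, of v] by simp
    qed
    have tr: "stable n R x \<and> (\<forall>p. S x p = S c p)" using transfer[OF stc buc cx bd] .
    hence stx: "stable n R x" and Seq: "\<forall>p. S x p = S c p" by auto
    have bux: "burns x" using burns_cong[OF Seq buc] .
    have tme: "tm x = tm c" using tm_cong[OF Seq] .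
    have xR: "x \<in> Rec n R" using Rec_iff cx stx bux by blast
    have mc: "minrec n R x = c"
    proof
      fix v show "minrec n R x v = c v"
      proof (cases "v \<in> {1..n}")
        case True thus ?thesis using minrec_Lo[OF stx bux True] tme cLo[OF True] by simp
      next
        case False
        have "minrec n R x v = 0" by (simp only: minrec_def if_not_P[OF False] if_False)
        thus ?thesis using c0[OF False] by simp
      qed
    qed
    have Te: "phiCT n R (minrec n R x) = T" using mc phiCT_phiTC[OF EW] by (simp add: c_def)
    have ae: "a = (\<lambda>i. if i \<in> {1..n} then int (x i) - int (minrec n R x i) else 0)"
    proof
      fix i show "a i = (if i \<in> {1..n} then int (x i) - int (minrec n R x i) else 0)"
      proof (cases "i \<in> {1..n}")
        case True thus ?thesis using ha mc by (simp add: x_def)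
      next
        case False
        have "a i = 0" using assms(3) False by blast
        thus ?thesis by (simp only: if_not_P[OF False])
      qed
    qed
    show "(T, a) \<in> RecEW n R"
      unfolding RecEW_def using xR Te ae by (intro image_eqI[of _ _ x]) auto
  qed
qed


end
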